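(* Let $\mathsf P$ be a one-move rider with basic move $(c,d)$ and let $q\ge2$. Then $u_{\mathsf P}(q;n)$, as a quasipolynomial function of $n$, has period $\max(|c|,|d|)$.
   Context: A one-move rider has a single basic move $(c,d)\in\mathbb Z^2\setminus\{0\}$ with $\gcd(c,d)=1$. Pieces are placed on the $n\times n$ board $[n]^2=\{1,\dots,n\}^2$; two pieces at positions $z,z'$ attack each other if $z'-z$ is an integer multiple of $(c,d)$ (in particular if $z=z'$). $u_{\mathsf P}(q;n)$ is the number of ways to place $q$ unlabelled pieces on $[n]^2$ with no two attacking each other; it is a quasipolynomial in $n$, and its period is the least $p$ such that it is given by polynomials in $n$ depending only on $n \bmod p$. *)

theory Defs
  imports "HOL-Computational_Algebra.Polynomial"
begin

definition board :: "nat \<Rightarrow> (int \<times> int) set" where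
  "board n = {1..int n} \<times> {1..int n}"

definition attacks :: "int \<Rightarrow> int \<Rightarrow> int \<times> int \<Rightarrow> int \<times> int \<Rightarrow> bool" where
  "attacks c d z z' \<longleftrightarrow> (\<exists>k::int. fst z' - fst z = k * c \<and> snd z' - snd z = k * d)"

definition u_rider :: "int \<Rightarrow> int \<Rightarrow> nat \<Rightarrow> nat \<Rightarrow> nat" where
  "u_rider c d q n = card {S. S \<subseteq> board n \<and> card S = q \<and>
       (\<forall>z\<in>S. \<forall>z'\<in>S. z \<noteq> z' \<longrightarrow> \<not> attacks c d z z')}"

definition is_quasi_period :: "(nat \<Rightarrow> nat) \<Rightarrow> nat \<Rightarrow> bool" where
  "is_quasi_period f p \<longleftrightarrow> p > 0 \<and>
     (\<exists>P :: nat \<Rightarrow> real poly. \<forall>n\<ge>1. real (f n) = poly (P (n mod p)) (real n))"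

definition quasi_period :: "(nat \<Rightarrow> nat) \<Rightarrow> nat" where
  "quasi_period f = (LEAST p. is_quasi_period f p)"

end

theory Submission
  imports Defs "HOL-Library.FuncSet"
begin


definition esym :: "'a set \<Rightarrow> ('a \<Rightarrow> real) \<Rightarrow> nat \<Rightarrow> real" where
  "esym W w m = (\<Sum>T | T \<subseteq> W \<and> card T = m. \<Prod>t\<in>T. w t)"

definition psum :: "'a set \<Rightarrow> ('a \<Rightarrow> real) \<Rightarrow> nat \<Rightarrow> real" where
  "psum W w i = (\<Sum>t\<in>W. w t ^ i)"

lemma esym_0: "finite W \<Longrightarrow> esym W w 0 = 1"
proof -
  assume "finite W"
  have "{T. T \<subseteq> W \<and> card T = 0} = {{}}" using \<open>finite W\<close>
    by (auto dest: finite_subset)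
  then show ?thesis by (simp add: esym_def)
qed

lemma esym_empty_Suc: "esym {} w (Suc m) = 0"
proof -
  have "{T. T \<subseteq> {} \<and> card T = Suc m} = {}" by auto
  then show ?thesis by (simp add: esym_def)
qed

lemma esym_insert:
  assumes "finite W" "x \<notin> W"
  shows "esym (insert x W) w (Suc m) = esym W w (Suc m) + w x * esym W w m"
proof -
  let ?A = "{T. T \<subseteq> W \<and> card T = Suc m}"
  let ?B = "{T. T \<subseteq> W \<and> card T = m}"
  have fin: "finite {T. T \<subseteq> W}" using assms by simp
  have eq: "{T. T \<subseteq> insert x W \<and> card T = Suc m} = ?A \<union> insert x ` ?B"
  proof (rule set_eqI, rule iffI)
    fix T assume T: "T \<in> {T. T \<subseteq> insert x W \<and> card T = Suc m}"
    show "T \<in> ?A \<union> insert x ` ?B"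
    proof (cases "x \<in> T")
      case True
      have fT: "finite T" using T assms by (auto dest: finite_subset)
      have "T = insert x (T - {x})" using True by auto
      moreover have "T - {x} \<in> ?B" using T True fT assms by (auto simp: card_Diff_singleton)
      ultimately show ?thesis by blast
    next
      case False then show ?thesis using T by auto
    qed
  next
    fix T assume "T \<in> ?A \<union> insert x ` ?B"
    then show "T \<in> {T. T \<subseteq> insert x W \<and> card T = Suc m}"
    proof
      assume "T \<in> ?A" then show ?thesis by auto
    next
      assume "T \<in> insert x ` ?B"
      then obtain U where U: "U \<in> ?B" "T = insert x U" by auto
      have "finite U" using U assms by (auto dest: finite_subset)
      moreover have "x \<notin> U" using U assms by auto
      ultimately show ?thesis using U by auto
    qed
  qed
  have disj: "?A \<inter> insert x ` ?B = {}" using assms by auto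
  have finA: "finite ?A" by (rule finite_subset[OF _ fin]) auto
  have finB: "finite ?B" by (rule finite_subset[OF _ fin]) auto
  have inj: "inj_on (insert x) ?B" unfolding inj_on_def using assms by (metis (no_types, lifting) Diff_insert_absorb mem_Collect_eq subsetD)
  have "esym (insert x W) w (Suc m) = (\<Sum>T\<in>?A. \<Prod>t\<in>T. w t) + (\<Sum>T\<in>insert x ` ?B. \<Prod>t\<in>T. w t)"
    unfolding esym_def eq by (rule sum.union_disjoint) (use finA finB disj in auto)
  also have "(\<Sum>T\<in>insert x ` ?B. \<Prod>t\<in>T. w t) = (\<Sum>U\<in>?B. \<Prod>t\<in>insert x U. w t)"
    by (rule sum.reindex[OF inj, unfolded comp_def])
  also have "\<dots> = (\<Sum>U\<in>?B. w x * (\<Prod>t\<in>U. w t))"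
  proof (rule sum.cong[OF refl])
    fix U assume "U \<in> ?B"
    then have "finite U" "x \<notin> U" using assms by (auto dest: finite_subset)
    then show "(\<Prod>t\<in>insert x U. w t) = w x * (\<Prod>t\<in>U. w t)" by simp
  qed
  also have "\<dots> = w x * esym W w m" by (simp add: esym_def sum_distrib_left)
  finally show ?thesis by (simp add: esym_def)
qed

lemma esym_insert':
  assumes "finite W" "x \<notin> W"
  shows "esym (insert x W) w k = esym W w k + (if k = 0 then 0 else w x * esym W w (k - 1))"
  using assms esym_insert[OF assms, of w "k - 1"] esym_0[of W] esym_0[of "insert x W"]
  by (cases k) auto

lemma newton_aux:
  fixes e :: "nat \<Rightarrow> real" and w :: real
  shows "(\<Sum>i<Suc m. (-1)^i * e (Suc m - Suc i) * w ^ Suc i)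
       + (\<Sum>i<Suc m. (-1)^i * (if Suc m - Suc i = 0 then 0 else w * e (Suc m - Suc i - 1)) * w ^ Suc i)
       = w * e m"
proof -
  have 1: "(\<Sum>i<Suc m. (-1)^i * e (Suc m - Suc i) * w ^ Suc i)
     = e m * w + (\<Sum>i<m. (-1)^(Suc i) * e (m - Suc i) * w ^ Suc (Suc i))"
    by (subst sum.lessThan_Suc_shift) simp
  have 2: "(\<Sum>i<Suc m. (-1)^i * (if Suc m - Suc i = 0 then 0 else w * e (Suc m - Suc i - 1)) * w ^ Suc i)
     = (\<Sum>i<m. (-1)^i * (w * e (m - Suc i)) * w ^ Suc i)"
    by (subst sum.lessThan_Suc) (auto intro!: sum.cong)
  have 3: "(\<Sum>i<m. (-1)^(Suc i) * e (m - Suc i) * w ^ Suc (Suc i)) = - (\<Sum>i<m. (-1)^i * (w * e (m - Suc i)) * w ^ Suc i)"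
    by (simp add: sum_negf[symmetric] algebra_simps)
  show ?thesis using 1 2 3 by simp
qed

lemma newton:
  assumes "finite W"
  shows "real (Suc m) * esym W w (Suc m) = (\<Sum>i<Suc m. (-1)^i * esym W w (m - i) * psum W w (Suc i))"
  using assms
proof (induction W arbitrary: m rule: finite_induct)
  case empty
  then show ?case by (simp add: esym_empty_Suc psum_def)
next
  case (insert x W)
  let ?e = "esym W w" and ?p = "psum W w"
  have e': "\<And>k. esym (insert x W) w k = ?e k + (if k = 0 then 0 else w x * ?e (k - 1))"
    using esym_insert'[OF insert(1,2)] by simp
  have p': "\<And>i. psum (insert x W) w i = ?p i + w x ^ i"
    using insert(1,2) by (simp add: psum_def)
  have IH: "\<And>m. real (Suc m) * ?e (Suc m) = (\<Sum>i<Suc m. (-1)^i * ?e (m - i) * ?p (Suc i))"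
    by (rule insert.IH)
  have "(\<Sum>i<Suc m. (-1)^i * esym (insert x W) w (m - i) * psum (insert x W) w (Suc i))
      = (\<Sum>i<Suc m. (-1)^i * ?e (m - i) * ?p (Suc i))
      + (\<Sum>i<Suc m. (-1)^i * (if m - i = 0 then 0 else w x * ?e (m - i - 1)) * ?p (Suc i))
      + ((\<Sum>i<Suc m. (-1)^i * ?e (Suc m - Suc i) * w x ^ Suc i)
      + (\<Sum>i<Suc m. (-1)^i * (if Suc m - Suc i = 0 then 0 else w x * ?e (Suc m - Suc i - 1)) * w x ^ Suc i))"
    unfolding e' p' by (simp add: sum.distrib[symmetric] algebra_simps)
  also have "(\<Sum>i<Suc m. (-1)^i * (if m - i = 0 then 0 else w x * ?e (m - i - 1)) * ?p (Suc i))
       = w x * real m * ?e m"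
  proof (cases m)
    case 0 then show ?thesis by simp
  next
    case (Suc k)
    have "(\<Sum>i<Suc m. (-1)^i * (if m - i = 0 then 0 else w x * ?e (m - i - 1)) * ?p (Suc i))
       = (\<Sum>i<Suc k. (-1)^i * (w x * ?e (k - i)) * ?p (Suc i))"
      unfolding Suc by (subst sum.lessThan_Suc) (auto intro!: sum.cong simp: Suc_diff_le)
    also have "\<dots> = w x * (\<Sum>i<Suc k. (-1)^i * ?e (k - i) * ?p (Suc i))"
      by (simp add: sum_distrib_left algebra_simps)
    also have "\<dots> = w x * real m * ?e m" using IH[of k] Suc by simp
    finally show ?thesis .
  qed
  also have "(\<Sum>i<Suc m. (-1)^i * ?e (Suc m - Suc i) * w x ^ Suc i)
      + (\<Sum>i<Suc m. (-1)^i * (if Suc m - Suc i = 0 then 0 else w x * ?e (Suc m - Suc i - 1)) * w x ^ Suc i)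
      = w x * ?e m" by (rule newton_aux)
  finally show ?case using IH[of m] e'[of "Suc m"] by (simp add: algebra_simps)
qed


locale rider =
  fixes c d :: int
  assumes nz: "(c, d) \<noteq> (0, 0)"
begin

definition I :: "nat \<Rightarrow> int \<times> int \<Rightarrow> int set" where
  "I n z = {t. (fst z - t * c, snd z - t * d) \<in> board n}"

definition hi :: "nat \<Rightarrow> int \<times> int \<Rightarrow> int" where
  "hi n z = Max (I n z)"

definition pi :: "nat \<Rightarrow> int \<times> int \<Rightarrow> int \<times> int" where
  "pi n z = (fst z - hi n z * c, snd z - hi n z * d)"

definition rho :: "nat \<Rightarrow> int \<times> int \<Rightarrow> nat" where
  "rho n z = nat (hi n z)"

lemma board_iff: "z \<in> board n \<longleftrightarrow> 1 \<le> fst z \<and> fst z \<le> int n \<and> 1 \<le> snd z \<and> snd z \<le> int n"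
  by (cases z) (auto simp: board_def)

lemma I_bound:
  assumes "z \<in> board n" "t \<in> I n z"
  shows "\<bar>t\<bar> \<le> int n - 1"
proof -
  have h1: "\<bar>t * c\<bar> \<le> int n - 1" and h2: "\<bar>t * d\<bar> \<le> int n - 1"
    using assms by (auto simp: I_def board_iff)
  show ?thesis
  proof (cases "c = 0")
    case True
    then have "d \<noteq> 0" using nz by auto
    then have "1 \<le> \<bar>d\<bar>" by linarith
    then have "\<bar>t\<bar> * 1 \<le> \<bar>t\<bar> * \<bar>d\<bar>" by (intro mult_left_mono) auto
    then have "\<bar>t\<bar> \<le> \<bar>t * d\<bar>" by (simp add: abs_mult)
    then show ?thesis using h2 by linarith
  next
    case False
    then have "1 \<le> \<bar>c\<bar>" by linarith
    then have "\<bar>t\<bar> * 1 \<le> \<bar>t\<bar> * \<bar>c\<bar>" by (intro mult_left_mono) auto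
    then have "\<bar>t\<bar> \<le> \<bar>t * c\<bar>" by (simp add: abs_mult)
    then show ?thesis using h1 by linarith
  qed
qed

lemma I_finite: "z \<in> board n \<Longrightarrow> finite (I n z)"
proof -
  assume z: "z \<in> board n"
  have "\<forall>t\<in>I n z. \<bar>t\<bar> \<le> int n - 1" using I_bound[OF z] by blast
  then have "I n z \<subseteq> {-(int n)..int n}" by force
  then show ?thesis by (rule finite_subset) simp
qed

lemma I_0: "z \<in> board n \<Longrightarrow> 0 \<in> I n z"
  by (cases z) (simp add: I_def)

lemma I_convex:
  assumes "t1 \<in> I n z" "t2 \<in> I n z" "t1 \<le> t" "t \<le> t2"
  shows "t \<in> I n z"
proof -
  have a: "t1 * c \<le> t * c \<and> t * c \<le> t2 * c \<or> t2 * c \<le> t * c \<and> t * c \<le> t1 * c"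
    using assms(3,4) by (cases "c \<ge> 0") (auto intro: mult_right_mono mult_right_mono_neg)
  have b: "t1 * d \<le> t * d \<and> t * d \<le> t2 * d \<or> t2 * d \<le> t * d \<and> t * d \<le> t1 * d"
    using assms(3,4) by (cases "d \<ge> 0") (auto intro: mult_right_mono mult_right_mono_neg)
  show ?thesis using assms(1,2) a b by (auto simp: I_def board_iff)
qed

lemma hi_in: "z \<in> board n \<Longrightarrow> hi n z \<in> I n z"
  unfolding hi_def by (rule Max_in) (use I_finite[of z n] I_0[of z n] in auto)

lemma hi_ge0: "z \<in> board n \<Longrightarrow> 0 \<le> hi n z"
  unfolding hi_def by (rule Max_ge) (use I_finite[of z n] I_0[of z n] in auto)

lemma hi_le: "z \<in> board n \<Longrightarrow> hi n z \<le> int n - 1"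
  using I_bound hi_in by fastforce

lemma I_iff:
  assumes "z \<in> board n" "0 \<le> t"
  shows "t \<in> I n z \<longleftrightarrow> t \<le> hi n z"
proof
  assume "t \<in> I n z" then show "t \<le> hi n z" unfolding hi_def using I_finite assms by auto
next
  assume "t \<le> hi n z" then show "t \<in> I n z"
    using I_convex[OF I_0 hi_in] assms by blast
qed

lemma I_shift: "I n (fst z + k * c, snd z + k * d) = (\<lambda>t. t + k) ` I n z"
proof -
  have *: "t \<in> I n (fst z + k * c, snd z + k * d) \<longleftrightarrow> t - k \<in> I n z" for t
    by (simp add: I_def algebra_simps)
  show ?thesis
  proof (rule set_eqI)
    fix t
    show "t \<in> I n (fst z + k * c, snd z + k * d) \<longleftrightarrow> t \<in> (\<lambda>t. t + k) ` I n z"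
    proof
      assume "t \<in> I n (fst z + k * c, snd z + k * d)"
      then have "t - k \<in> I n z" using * by blast
      then show "t \<in> (\<lambda>t. t + k) ` I n z" by (rule rev_image_eqI) simp
    next
      assume "t \<in> (\<lambda>t. t + k) ` I n z"
      then obtain t' where "t' \<in> I n z" "t = t' + k" by blast
      then show "t \<in> I n (fst z + k * c, snd z + k * d)" using *[of t] by simp
    qed
  qed
qed

lemma hi_shift:
  assumes "z \<in> board n" "(fst z + k * c, snd z + k * d) \<in> board n"
  shows "hi n (fst z + k * c, snd z + k * d) = hi n z + k"
proof -
  have fin: "finite (I n z)" using assms I_finite by auto
  have "Max ((\<lambda>t. t + k) ` I n z) = hi n z + k"
    unfolding hi_def
    by (rule Max_eqI) (use fin hi_in[OF assms(1)] in \<open>auto simp: hi_def\<close>)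
  then show ?thesis by (simp add: hi_def I_shift)
qed

lemma pi_shift:
  assumes "z \<in> board n" "(fst z + k * c, snd z + k * d) \<in> board n"
  shows "pi n (fst z + k * c, snd z + k * d) = pi n z"
  using hi_shift[OF assms] by (simp add: pi_def algebra_simps)

lemma pi_decomp: "z = (fst (pi n z) + hi n z * c, snd (pi n z) + hi n z * d)"
  by (simp add: pi_def)

lemma attacks_iff:
  assumes "z \<in> board n" "z' \<in> board n"
  shows "attacks c d z z' \<longleftrightarrow> pi n z = pi n z'"
proof
  assume "attacks c d z z'"
  then obtain k where k: "fst z' - fst z = k * c" "snd z' - snd z = k * d"
    by (auto simp: attacks_def)
  then have "z' = (fst z + k * c, snd z + k * d)" by (cases z') auto
  then show "pi n z = pi n z'" using pi_shift[OF assms(1)] assms(2) by metis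
next
  assume "pi n z = pi n z'"
  then show "attacks c d z z'"
    using pi_decomp[of z n] pi_decomp[of z' n] unfolding attacks_def
    by (intro exI[of _ "hi n z' - hi n z"]) (metis (no_types, lifting) add_diff_cancel_left fst_conv left_diff_distrib snd_conv)
qed

lemma card_int_filter:
  fixes e :: int and N :: int
  assumes "0 \<le> j"
  shows "card {x \<in> {1..N}. 1 \<le> x - j * e \<and> x - j * e \<le> N} = nat (N - j * \<bar>e\<bar>)"
proof (cases "e \<ge> 0")
  case True
  have "0 \<le> j * e" using assms True by simp
  then have "{x \<in> {1..N}. 1 \<le> x - j * e \<and> x - j * e \<le> N} = {1 + j * e..N}" by auto
  then show ?thesis using True by simp
next
  case False
  have "j * e \<le> 0" using assms False by (simp add: mult_nonneg_nonpos)
  then have "{x \<in> {1..N}. 1 \<le> x - j * e \<and> x - j * e \<le> N} = {1..N + j * e}" by auto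
  then show ?thesis using False by simp
qed

lemma card_rho_ge:
  "card {z \<in> board n. j \<le> rho n z} = nat (int n - int j * \<bar>c\<bar>) * nat (int n - int j * \<bar>d\<bar>)"
proof -
  have "{z \<in> board n. j \<le> rho n z} =
        {x \<in> {1..int n}. 1 \<le> x - int j * c \<and> x - int j * c \<le> int n} \<times>
        {y \<in> {1..int n}. 1 \<le> y - int j * d \<and> y - int j * d \<le> int n}"
  proof -
    have "z \<in> board n \<and> j \<le> rho n z \<longleftrightarrow> z \<in> board n \<and> int j \<in> I n z" for z
      using I_iff[of z n "int j"] hi_ge0[of z n] by (auto simp: rho_def)
    then show ?thesis by (auto simp: I_def board_iff)
  qed
  then show ?thesis using card_int_filter[of "int j"] by (simp add: card_cartesian_product)
qed

end


lemma card_inj_subsets_fixed_image: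
  assumes "finite A" "T \<subseteq> f ` A"
  shows "card {S. S \<subseteq> A \<and> inj_on f S \<and> f ` S = T} = (\<Prod>t\<in>T. card {x\<in>A. f x = t})"
proof -
  let ?F = "\<lambda>t. {x\<in>A. f x = t}"
  have finT: "finite T" using assms finite_subset by blast
  have bij: "bij_betw (\<lambda>h. h ` T) (Pi\<^sub>E T ?F) {S. S \<subseteq> A \<and> inj_on f S \<and> f ` S = T}"
  proof (rule bij_betwI')
    fix h h' assume h: "h \<in> Pi\<^sub>E T ?F" and h': "h' \<in> Pi\<^sub>E T ?F"
    show "(h ` T = h' ` T) = (h = h')"
    proof
      assume eq: "h ` T = h' ` T"
      show "h = h'"
      proof (rule PiE_ext[OF h h'])
        fix t assume t: "t \<in> T"
        then have "h t \<in> h' ` T" using eq by blast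
        then obtain t' where t': "t' \<in> T" "h t = h' t'" by blast
        have "f (h t) = t" using PiE_mem[OF h t] by simp
        moreover have "f (h' t') = t'" using PiE_mem[OF h' t'(1)] by simp
        ultimately show "h t = h' t" using t' by simp
      qed
    qed simp
  next
    fix h assume h: "h \<in> Pi\<^sub>E T ?F"
    have 1: "h ` T \<subseteq> A" using PiE_mem[OF h] by auto
    have 2: "f ` (h ` T) = T"
    proof -
      have "f (h t) = t" if "t \<in> T" for t using PiE_mem[OF h that] by simp
      then show ?thesis by (force simp: image_image)
    qed
    have 3: "inj_on f (h ` T)"
    proof (rule inj_onI)
      fix x y assume "x \<in> h ` T" "y \<in> h ` T" "f x = f y"
      then obtain t s where "t \<in> T" "s \<in> T" "x = h t" "y = h s" by blast
      moreover have "f (h t) = t" "f (h s) = s" using PiE_mem[OF h] calculation by auto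
      ultimately show "x = y" using \<open>f x = f y\<close> by simp
    qed
    show "h ` T \<in> {S. S \<subseteq> A \<and> inj_on f S \<and> f ` S = T}" using 1 2 3 by blast
  next
    fix S assume S: "S \<in> {S. S \<subseteq> A \<and> inj_on f S \<and> f ` S = T}"
    define h where "h = restrict (\<lambda>t. THE x. x \<in> S \<and> f x = t) T"
    have the: "h t \<in> S \<and> f (h t) = t" if "t \<in> T" for t
    proof -
      have ex: "\<exists>!x. x \<in> S \<and> f x = t" using S that by (auto simp: inj_on_def)
      show ?thesis unfolding h_def using that theI'[OF ex] by simp
    qed
    have "h \<in> Pi\<^sub>E T ?F" using the S unfolding h_def by (auto simp: PiE_iff)
    moreover have "S = h ` T"
    proof
      show "h ` T \<subseteq> S" using the by auto
      show "S \<subseteq> h ` T"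
      proof
        fix x assume x: "x \<in> S"
        then have "f x \<in> T" using S by blast
        then have "h (f x) \<in> S" "f (h (f x)) = f x" using the by auto
        then have "h (f x) = x" using S x by (auto simp: inj_on_def)
        then show "x \<in> h ` T" using \<open>f x \<in> T\<close> by force
      qed
    qed
    ultimately show "\<exists>h \<in> Pi\<^sub>E T ?F. S = h ` T" by blast
  qed
  have "card {S. S \<subseteq> A \<and> inj_on f S \<and> f ` S = T} = card (Pi\<^sub>E T ?F)"
    using bij_betw_same_card[OF bij] by simp
  also have "\<dots> = (\<Prod>t\<in>T. card (?F t))" by (rule card_PiE[OF finT])
  finally show ?thesis .
qed

lemma card_inj_subsets:
  assumes "finite A"
  shows "real (card {S. S \<subseteq> A \<and> card S = q \<and> inj_on f S})
         = (\<Sum>T | T \<subseteq> f ` A \<and> card T = q. \<Prod>t\<in>T. real (card {x\<in>A. f x = t}))"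
proof -
  let ?X = "{S. S \<subseteq> A \<and> card S = q \<and> inj_on f S}"
  let ?Y = "{T. T \<subseteq> f ` A \<and> card T = q}"
  have finX: "finite ?X" by (rule finite_subset[of _ "Pow A"]) (use assms in auto)
  have finY: "finite ?Y" by (rule finite_subset[of _ "Pow (f ` A)"]) (use assms in auto)
  have img: "(\<lambda>S. f ` S) ` ?X \<subseteq> ?Y" by (auto simp: card_image)
  have "real (card ?X) = (\<Sum>S\<in>?X. 1)" by simp
  also have "\<dots> = (\<Sum>T\<in>?Y. \<Sum>S\<in>{S \<in> ?X. f ` S = T}. 1)"
    by (rule sum.group[symmetric, OF finX finY img])
  also have "\<dots> = (\<Sum>T\<in>?Y. \<Prod>t\<in>T. real (card {x\<in>A. f x = t}))"
  proof (rule sum.cong[OF refl])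
    fix T assume T: "T \<in> ?Y"
    have "{S \<in> ?X. f ` S = T} = {S. S \<subseteq> A \<and> inj_on f S \<and> f ` S = T}"
      using T by (auto simp: card_image)
    then have "(\<Sum>S\<in>{S \<in> ?X. f ` S = T}. 1::real) = real (\<Prod>t\<in>T. card {x\<in>A. f x = t})"
      using card_inj_subsets_fixed_image[OF assms, of T f] T by simp
    then show "(\<Sum>S\<in>{S \<in> ?X. f ` S = T}. 1::real) = (\<Prod>t\<in>T. real (card {x\<in>A. f x = t}))"
      by simp
  qed
  finally show ?thesis .
qed

lemma downclosed_nat:
  fixes A :: "nat set"
  assumes "finite A" "\<And>i j. i \<in> A \<Longrightarrow> j \<le> i \<Longrightarrow> j \<in> A"
  shows "A = {..<card A}"
proof (cases "A = {}")
  case True then show ?thesis by simp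
next
  case False
  have "A = {..Max A}"
  proof
    show "A \<subseteq> {..Max A}" using assms(1) by auto
    show "{..Max A} \<subseteq> A" using assms(2) Max_in[OF assms(1) False] by auto
  qed
  then show ?thesis by (metis card_atMost lessThan_Suc_atMost)
qed


definition g :: "nat \<Rightarrow> nat \<Rightarrow> real" where
  "g k m = (real m + 1) ^ k - real m ^ k"

definition Dg :: "nat \<Rightarrow> nat \<Rightarrow> real" where
  "Dg k j = g k j - (if j = 0 then 0 else g k (j - 1))"

lemma sum_Dg: "(\<Sum>j\<le>m. Dg k j) = g k m"
  by (induction m) (auto simp: Dg_def)

context rider
begin

definition fib :: "nat \<Rightarrow> int \<times> int \<Rightarrow> (int \<times> int) set" where
  "fib n w = {z \<in> board n. pi n z = w}"

definition Wn :: "nat \<Rightarrow> (int \<times> int) set" where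
  "Wn n = pi n ` board n"

definition wt :: "nat \<Rightarrow> int \<times> int \<Rightarrow> real" where
  "wt n w = real (card (fib n w))"

lemma finite_board: "finite (board n)"
  by (simp add: board_def)

lemma finite_Wn: "finite (Wn n)"
  by (simp add: Wn_def finite_board)

lemma u_esym: "real (u_rider c d q n) = esym (Wn n) (wt n) q"
proof -
  have "{S. S \<subseteq> board n \<and> card S = q \<and> (\<forall>z\<in>S. \<forall>z'\<in>S. z \<noteq> z' \<longrightarrow> \<not> attacks c d z z')}
      = {S. S \<subseteq> board n \<and> card S = q \<and> inj_on (pi n) S}"
    using attacks_iff by (auto simp: inj_on_def) blast+
  then show ?thesis
    unfolding u_rider_def esym_def wt_def Wn_def fib_def
    by (simp add: card_inj_subsets[OF finite_board])
qed

lemma hi_eq_rho: "z \<in> board n \<Longrightarrow> hi n z = int (rho n z)"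
  using hi_ge0 by (simp add: rho_def)

lemma fib_rho_inj: "inj_on (rho n) (fib n w)"
proof (rule inj_onI)
  fix z z' assume z: "z \<in> fib n w" and z': "z' \<in> fib n w" and eq: "rho n z = rho n z'"
  have "hi n z = hi n z'" using z z' eq hi_eq_rho by (auto simp: fib_def)
  moreover have "pi n z = pi n z'" using z z' by (auto simp: fib_def)
  ultimately show "z = z'" using pi_decomp[of z n] pi_decomp[of z' n] by metis
qed

lemma fib_rho_image: "rho n ` fib n w = {..<card (fib n w)}"
proof -
  have fin: "finite (fib n w)" using finite_board by (simp add: fib_def)
  have dc: "j \<in> rho n ` fib n w" if i: "i \<in> rho n ` fib n w" and ji: "j \<le> i" for i j
  proof -
    obtain z where z: "z \<in> fib n w" "i = rho n z" using i by blast
    have zb: "z \<in> board n" and pz: "pi n z = w" using z by (auto simp: fib_def)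
    define k where "k = int j - hi n z"
    have hz: "hi n z = int i" using z hi_eq_rho zb by simp
    have "hi n z - int j \<in> I n z" using I_iff[OF zb, of "hi n z - int j"] ji hz by simp
    then have zb': "(fst z + k * c, snd z + k * d) \<in> board n"
      by (simp add: I_def k_def algebra_simps)
    have "hi n (fst z + k * c, snd z + k * d) = int j" using hi_shift[OF zb zb'] by (simp add: k_def)
    then have "rho n (fst z + k * c, snd z + k * d) = j" by (simp add: rho_def)
    moreover have "(fst z + k * c, snd z + k * d) \<in> fib n w"
      using pi_shift[OF zb zb'] zb' pz by (simp add: fib_def)
    ultimately show ?thesis by (metis image_eqI)
  qed
  have "rho n ` fib n w = {..<card (rho n ` fib n w)}"
    by (rule downclosed_nat) (use fin dc in auto)
  then show ?thesis using card_image[OF fib_rho_inj] by simp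
qed

lemma fiber_sum:
  assumes "k \<ge> 1"
  shows "(\<Sum>z\<in>fib n w. g k (rho n z)) = wt n w ^ k"
proof -
  have "(\<Sum>z\<in>fib n w. g k (rho n z)) = (\<Sum>i\<in>rho n ` fib n w. g k i)"
    by (rule sum.reindex[OF fib_rho_inj, symmetric, unfolded comp_def])
  also have "\<dots> = (\<Sum>i<card (fib n w). g k i)" by (simp add: fib_rho_image)
  also have "\<dots> = wt n w ^ k"
    unfolding g_def wt_def using sum_lessThan_telescope[of "\<lambda>i. (real i) ^ k" "card (fib n w)"] assms
    by (simp add: add.commute)
  finally show ?thesis .
qed

lemma rho_lt: "z \<in> board n \<Longrightarrow> rho n z < n"
  using hi_le[of z n] hi_ge0[of z n] by (simp add: rho_def)

lemma psum_formula:
  assumes "k \<ge> 1"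
  shows "psum (Wn n) (wt n) k = (\<Sum>j\<le>n. Dg k j * real (nat (int n - int j * \<bar>c\<bar>) * nat (int n - int j * \<bar>d\<bar>)))"
proof -
  have "psum (Wn n) (wt n) k = (\<Sum>w\<in>Wn n. \<Sum>z\<in>fib n w. g k (rho n z))"
    unfolding psum_def using fiber_sum[OF assms] by simp
  also have "\<dots> = (\<Sum>z\<in>board n. g k (rho n z))"
    unfolding fib_def Wn_def
    by (rule sum.group) (auto simp: finite_board)
  also have "\<dots> = (\<Sum>z\<in>board n. \<Sum>j\<le>n. if j \<le> rho n z then Dg k j else 0)"
  proof (rule sum.cong[OF refl])
    fix z assume z: "z \<in> board n"
    have "(\<Sum>j\<le>n. if j \<le> rho n z then Dg k j else 0) = (\<Sum>j\<in>{..n} \<inter> {j. j \<le> rho n z}. Dg k j)"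
      by (simp add: sum.inter_restrict)
    also have "{..n} \<inter> {j. j \<le> rho n z} = {..rho n z}" using rho_lt[OF z] by auto
    finally show "g k (rho n z) = (\<Sum>j\<le>n. if j \<le> rho n z then Dg k j else 0)"
      by (simp add: sum_Dg)
  qed
  also have "\<dots> = (\<Sum>j\<le>n. \<Sum>z\<in>board n. if j \<le> rho n z then Dg k j else 0)"
    by (rule sum.swap)
  also have "\<dots> = (\<Sum>j\<le>n. Dg k j * real (card {z \<in> board n. j \<le> rho n z}))"
  proof (rule sum.cong[OF refl])
    fix j
    have "(\<Sum>z\<in>board n \<inter> {z. j \<le> rho n z}. Dg k j) = (\<Sum>z\<in>board n. if j \<le> rho n z then Dg k j else 0)"
      using sum.inter_restrict[OF finite_board, of "\<lambda>z. Dg k j" n "{z. j \<le> rho n z}"] by simp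
    moreover have "board n \<inter> {z. j \<le> rho n z} = {z \<in> board n. j \<le> rho n z}" by auto
    ultimately have "(\<Sum>z\<in>board n. if j \<le> rho n z then Dg k j else 0) = (\<Sum>z\<in>{z \<in> board n. j \<le> rho n z}. Dg k j)"
      by simp
    then show "(\<Sum>z\<in>board n. if j \<le> rho n z then Dg k j else 0) = Dg k j * real (card {z \<in> board n. j \<le> rho n z})"
      by simp
  qed
  finally show ?thesis by (simp add: card_rho_ge)
qed

end


definition polyJ :: "(nat \<Rightarrow> real) \<Rightarrow> bool" where
  "polyJ F \<longleftrightarrow> (\<exists>R. \<forall>J. F J = poly R (real J))"

lemma polyJ_const: "polyJ (\<lambda>J. c)"
  unfolding polyJ_def by (rule exI[of _ "[:c:]"]) simp

lemma polyJ_id: "polyJ (\<lambda>J. real J)"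
  unfolding polyJ_def by (rule exI[of _ "[:0,1:]"]) simp

lemma polyJ_add: "polyJ F \<Longrightarrow> polyJ G \<Longrightarrow> polyJ (\<lambda>J. F J + G J)"
  unfolding polyJ_def by (metis poly_add)

lemma polyJ_diff: "polyJ F \<Longrightarrow> polyJ G \<Longrightarrow> polyJ (\<lambda>J. F J - G J)"
  unfolding polyJ_def by (metis poly_diff)

lemma polyJ_mult: "polyJ F \<Longrightarrow> polyJ G \<Longrightarrow> polyJ (\<lambda>J. F J * G J)"
  unfolding polyJ_def by (metis poly_mult)

lemma polyJ_power: "polyJ F \<Longrightarrow> polyJ (\<lambda>J. F J ^ m)"
  by (induction m) (auto intro: polyJ_mult polyJ_const)

lemma polyJ_sum: "finite A \<Longrightarrow> (\<And>i. i \<in> A \<Longrightarrow> polyJ (F i)) \<Longrightarrow> polyJ (\<lambda>J. \<Sum>i\<in>A. F i J)"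
proof (induction A rule: finite_induct)
  case empty then show ?case by (simp add: polyJ_const)
next
  case (insert x A) then show ?case by (simp add: polyJ_add)
qed

lemma binom_diff:
  fixes x :: real
  shows "(x + 1) ^ Suc d - x ^ Suc d = real (Suc d) * x ^ d + (\<Sum>i<d. real (Suc d choose i) * x ^ i)"
proof -
  have "(x + 1) ^ Suc d = (\<Sum>k\<le>Suc d. real (Suc d choose k) * x ^ k)"
    using binomial_ring[of x 1 "Suc d"] by simp
  also have "\<dots> = (\<Sum>k<d. real (Suc d choose k) * x ^ k) + real (Suc d) * x ^ d + x ^ Suc d"
    by (simp add: lessThan_Suc_atMost[symmetric])
  finally show ?thesis by simp
qed

lemma faulhaber_mono: "polyJ (\<lambda>J. \<Sum>j=1..J. real j ^ d)"
proof (induction d rule: less_induct)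
  case (less d)
  define S where "S e J = (\<Sum>j=1..J. real j ^ e)" for e J
  have key: "real (Suc J) ^ Suc d - 1 = real (Suc d) * S d J + (\<Sum>i<d. real (Suc d choose i) * S i J)" for J
  proof -
    have "real (Suc J) ^ Suc d - 1 = (\<Sum>j=1..J. real (Suc j) ^ Suc d - real j ^ Suc d)"
      using sum_Suc_diff[of 1 J "\<lambda>j. real j ^ Suc d"] by simp
    also have "\<dots> = (\<Sum>j=1..J. real (Suc d) * real j ^ d + (\<Sum>i<d. real (Suc d choose i) * real j ^ i))"
    proof (rule sum.cong[OF refl])
      fix j
      have "real (Suc j) ^ Suc d - real j ^ Suc d = (real j + 1) ^ Suc d - real j ^ Suc d" by (simp add: add.commute)
      also have "\<dots> = real (Suc d) * real j ^ d + (\<Sum>i<d. real (Suc d choose i) * real j ^ i)"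
        by (rule binom_diff)
      finally show "real (Suc j) ^ Suc d - real j ^ Suc d = real (Suc d) * real j ^ d + (\<Sum>i<d. real (Suc d choose i) * real j ^ i)" .
    qed
    also have "\<dots> = real (Suc d) * S d J + (\<Sum>i<d. real (Suc d choose i) * S i J)"
      by (simp add: S_def sum.distrib sum_distrib_left) (rule sum.swap)
    finally show ?thesis .
  qed
  have eq: "S d J = (real (Suc J) ^ Suc d - 1 - (\<Sum>i<d. real (Suc d choose i) * S i J)) / real (Suc d)" for J
    using key[of J] by (simp add: field_simps)
  have "polyJ (\<lambda>J. (real (Suc J) ^ Suc d - 1 - (\<Sum>i<d. real (Suc d choose i) * S i J)) * (1 / real (Suc d)))"
    using less unfolding S_def
    by (intro polyJ_mult polyJ_diff polyJ_power polyJ_sum polyJ_const)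
       (auto simp: polyJ_add polyJ_id polyJ_const polyJ_mult)
  then show ?case using eq unfolding S_def by simp
qed

lemma faulhaber: "polyJ (\<lambda>J. \<Sum>j=1..J. poly P (real j))"
proof -
  have "(\<Sum>j=1..J. poly P (real j)) = (\<Sum>i\<le>degree P. coeff P i * (\<Sum>j=1..J. real j ^ i))" for J
  proof -
    have "(\<Sum>j=1..J. poly P (real j)) = (\<Sum>j=1..J. \<Sum>i\<le>degree P. coeff P i * real j ^ i)"
      by (simp add: poly_altdef)
    also have "\<dots> = (\<Sum>i\<le>degree P. \<Sum>j=1..J. coeff P i * real j ^ i)" by (rule sum.swap)
    finally show ?thesis by (simp add: sum_distrib_left)
  qed
  moreover have "polyJ (\<lambda>J. \<Sum>i\<le>degree P. coeff P i * (\<Sum>j=1..J. real j ^ i))"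
    by (intro polyJ_sum polyJ_mult polyJ_const faulhaber_mono) auto
  ultimately show ?thesis by simp
qed


definition qpoly :: "nat \<Rightarrow> (nat \<Rightarrow> real) \<Rightarrow> bool" where
  "qpoly a f \<longleftrightarrow> (\<forall>s\<in>{1..a}. \<exists>P. \<forall>J. f (a * J + s) = poly P (real (a * J + s)))"

definition QP :: "nat \<Rightarrow> (nat \<Rightarrow> real) \<Rightarrow> nat \<Rightarrow> real poly" where
  "QP a f s = (SOME P. \<forall>J. f (a * J + s) = poly P (real (a * J + s)))"

lemma poly_eq_AP:
  assumes "a \<ge> 1" "\<And>J. poly P (real (a * J + s)) = poly P' (real (a * J + s))"
  shows "P = P'"
proof (rule ccontr)
  assume "P \<noteq> P'"
  then have "P - P' \<noteq> 0" by simp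
  then have fin: "finite {x. poly (P - P') x = 0}" by (rule poly_roots_finite)
  have "range (\<lambda>J. real (a * J + s)) \<subseteq> {x. poly (P - P') x = 0}" using assms(2) by auto
  then have "finite (range (\<lambda>J. real (a * J + s)))" using fin finite_subset by blast
  moreover have "inj (\<lambda>J. real (a * J + s))" using assms(1) by (auto simp: inj_on_def)
  ultimately show False using finite_imageD infinite_UNIV_nat by blast
qed

lemma QP_eq: "qpoly a f \<Longrightarrow> s \<in> {1..a} \<Longrightarrow> f (a * J + s) = poly (QP a f s) (real (a * J + s))"
proof -
  assume q: "qpoly a f" and s: "s \<in> {1..a}"
  then obtain P where P: "\<forall>J. f (a * J + s) = poly P (real (a * J + s))" unfolding qpoly_def by blast
  have "\<forall>J. f (a * J + s) = poly (QP a f s) (real (a * J + s))"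
    unfolding QP_def by (rule someI[of _ P]) (rule P)
  then show ?thesis by blast
qed

lemma QP_unique:
  assumes "a \<ge> 1" "\<And>J. f (a * J + s) = poly P (real (a * J + s))"
  shows "QP a f s = P"
proof -
  have "\<forall>J. f (a * J + s) = poly (QP a f s) (real (a * J + s))"
    unfolding QP_def by (rule someI[of _ P]) (use assms in auto)
  then show ?thesis using poly_eq_AP[OF assms(1)] assms(2) by metis
qed

lemma qpoly_from_polyJ:
  assumes "a \<ge> 1" "\<And>s. s \<in> {1..a} \<Longrightarrow> polyJ (\<lambda>J. f (a * J + s))"
  shows "qpoly a f"
  unfolding qpoly_def
proof
  fix s assume s: "s \<in> {1..a}"
  obtain R where R: "\<And>J. f (a * J + s) = poly R (real J)" using assms(2)[OF s] by (auto simp: polyJ_def)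
  have "f (a * J + s) = poly (pcompose R [:- real s / real a, 1 / real a:]) (real (a * J + s))" for J
  proof -
    have "poly [:- real s / real a, 1 / real a:] (real (a * J + s)) = real J"
      using assms(1) by (simp add: field_simps)
    then show ?thesis by (simp add: R poly_pcompose)
  qed
  then show "\<exists>P. \<forall>J. f (a * J + s) = poly P (real (a * J + s))" by blast
qed

lemma qpoly_add: "qpoly a f \<Longrightarrow> qpoly a h \<Longrightarrow> qpoly a (\<lambda>n. f n + h n)"
  unfolding qpoly_def by (metis poly_add)
lemma qpoly_mult: "qpoly a f \<Longrightarrow> qpoly a h \<Longrightarrow> qpoly a (\<lambda>n. f n * h n)"
  unfolding qpoly_def by (metis poly_mult)
lemma qpoly_const: "qpoly a (\<lambda>n. r)"
  unfolding qpoly_def by (auto intro: exI[of _ "[:r:]"])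
lemma qpoly_sum: "finite A \<Longrightarrow> (\<And>i. i \<in> A \<Longrightarrow> qpoly a (F i)) \<Longrightarrow> qpoly a (\<lambda>n. \<Sum>i\<in>A. F i n)"
proof (induction A rule: finite_induct)
  case empty then show ?case by (simp add: qpoly_const)
next
  case (insert x A) then show ?case by (simp add: qpoly_add)
qed

lemma QP_add: "a \<ge> 1 \<Longrightarrow> qpoly a f \<Longrightarrow> qpoly a h \<Longrightarrow> s \<in> {1..a} \<Longrightarrow> QP a (\<lambda>n. f n + h n) s = QP a f s + QP a h s"
  by (rule QP_unique) (auto simp: QP_eq)
lemma QP_mult: "a \<ge> 1 \<Longrightarrow> qpoly a f \<Longrightarrow> qpoly a h \<Longrightarrow> s \<in> {1..a} \<Longrightarrow> QP a (\<lambda>n. f n * h n) s = QP a f s * QP a h s"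
  by (rule QP_unique) (auto simp: QP_eq)
lemma QP_const: "a \<ge> 1 \<Longrightarrow> QP a (\<lambda>n. r) s = [:r:]"
  by (rule QP_unique) auto
lemma QP_sum: "a \<ge> 1 \<Longrightarrow> finite A \<Longrightarrow> (\<And>i. i \<in> A \<Longrightarrow> qpoly a (F i)) \<Longrightarrow> s \<in> {1..a} \<Longrightarrow>
   QP a (\<lambda>n. \<Sum>i\<in>A. F i n) s = (\<Sum>i\<in>A. QP a (F i) s)"
  by (rule QP_unique) (auto simp: QP_eq poly_sum)

lemma lim_poly_div:
  fixes P :: "real poly"
  assumes "degree P \<le> D"
  shows "((\<lambda>x. poly P x / x ^ D) \<longlongrightarrow> coeff P D) at_top"
proof -
  have eq: "poly P x / x ^ D = (\<Sum>i\<le>D. coeff P i * (x ^ i / x ^ D))" if "x > 0" for x :: real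
  proof -
    have "poly P x = (\<Sum>i\<le>D. coeff P i * x ^ i)"
      unfolding poly_altdef
      by (rule sum.mono_neutral_left) (use assms in \<open>auto simp: coeff_eq_0\<close>)
    then show ?thesis by (simp add: sum_divide_distrib)
  qed
  have lim: "((\<lambda>x::real. coeff P i * (x ^ i / x ^ D)) \<longlongrightarrow> (if i = D then coeff P D else 0)) at_top"
    if "i \<le> D" for i
  proof (cases "i = D")
    case True
    have "eventually (\<lambda>x::real. coeff P i * (x ^ i / x ^ D) = coeff P D) at_top"
      using eventually_gt_at_top[of 0] by eventually_elim (simp add: True)
    note ev = this
    have "((\<lambda>x::real. coeff P D) \<longlongrightarrow> coeff P D) at_top" by simp
    with tendsto_cong[OF ev] True show ?thesis by simp
  next
    case False
    then have "i < D" using that by simp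
    have "((\<lambda>x::real. inverse (x ^ (D - i))) \<longlongrightarrow> 0) at_top"
      by (intro tendsto_inverse_0_at_top filterlim_pow_at_top filterlim_ident) (use \<open>i < D\<close> in auto)
    then have "((\<lambda>x::real. coeff P i * inverse (x ^ (D - i))) \<longlongrightarrow> coeff P i * 0) at_top"
      by (intro tendsto_mult tendsto_const)
    moreover have "eventually (\<lambda>x::real. coeff P i * inverse (x ^ (D - i)) = coeff P i * (x ^ i / x ^ D)) at_top"
      using eventually_gt_at_top[of 0]
    proof eventually_elim
      case (elim x)
      have "x ^ D = x ^ i * x ^ (D - i)" using \<open>i < D\<close> by (simp add: power_add[symmetric])
      then show ?case using elim by (simp add: field_simps)
    qed
    ultimately show ?thesis using False tendsto_cong by fastforce
  qed
  have "((\<lambda>x::real. \<Sum>i\<le>D. coeff P i * (x ^ i / x ^ D)) \<longlongrightarrow> (\<Sum>i\<le>D. if i = D then coeff P D else 0)) at_top"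
    by (rule tendsto_sum) (use lim in auto)
  then have "((\<lambda>x::real. \<Sum>i\<le>D. coeff P i * (x ^ i / x ^ D)) \<longlongrightarrow> coeff P D) at_top"
    by simp
  moreover have "eventually (\<lambda>x::real. (\<Sum>i\<le>D. coeff P i * (x ^ i / x ^ D)) = poly P x / x ^ D) at_top"
    using eventually_gt_at_top[of 0] by eventually_elim (simp add: eq)
  ultimately show ?thesis by (rule Lim_transform_eventually)
qed

lemma lim_poly_seq:
  fixes P :: "real poly"
  assumes "degree P \<le> D" "a > 0"
  shows "(\<lambda>J. poly P (a * real J + t) / real J ^ D) \<longlonglongrightarrow> coeff P D * a ^ D"
proof -
  have fl: "filterlim (\<lambda>J. a * real J + t) at_top sequentially"
  proof -
    have "filterlim (\<lambda>J. real J * a) at_top sequentially"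
      by (rule filterlim_at_top_mult_tendsto_pos[OF tendsto_const assms(2) filterlim_real_sequentially])
    then have "filterlim (\<lambda>J. t + real J * a) at_top sequentially"
      by (rule filterlim_tendsto_add_at_top[OF tendsto_const])
    then show ?thesis by (simp add: algebra_simps)
  qed
  have 1: "(\<lambda>J. poly P (a * real J + t) / (a * real J + t) ^ D) \<longlonglongrightarrow> coeff P D"
    using filterlim_compose[OF lim_poly_div[OF assms(1)] fl] by simp
  have 2: "(\<lambda>J. ((a * real J + t) / real J) ^ D) \<longlonglongrightarrow> a ^ D"
  proof -
    have "(\<lambda>J. a + t * inverse (real J)) \<longlonglongrightarrow> a + t * 0"
      by (intro tendsto_add tendsto_mult tendsto_const tendsto_inverse_0_at_top filterlim_real_sequentially)
    moreover have "eventually (\<lambda>J. a + t * inverse (real J) = (a * real J + t) / real J) sequentially"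
      using eventually_gt_at_top[of "0::nat"] by eventually_elim (simp add: field_simps)
    ultimately have "(\<lambda>J. (a * real J + t) / real J) \<longlonglongrightarrow> a"
      using Lim_transform_eventually by fastforce
    then show ?thesis by (intro tendsto_power)
  qed
  have "(\<lambda>J. poly P (a * real J + t) / (a * real J + t) ^ D * ((a * real J + t) / real J) ^ D) \<longlonglongrightarrow> coeff P D * a ^ D"
    by (rule tendsto_mult[OF 1 2])
  moreover have "eventually (\<lambda>J. poly P (a * real J + t) / (a * real J + t) ^ D * ((a * real J + t) / real J) ^ D
      = poly P (a * real J + t) / real J ^ D) sequentially"
  proof -
    have "eventually (\<lambda>J. a * real J + t > 0) sequentially"
      using fl by (simp add: filterlim_at_top_dense)
    then show ?thesis
      using eventually_gt_at_top[of "0::nat"] by eventually_elim (simp add: field_simps power_divide)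
  qed
  ultimately show ?thesis by (rule Lim_transform_eventually)
qed

lemma degree_from_growth:
  fixes P :: "real poly"
  assumes "a \<ge> 1" "\<And>J. \<bar>poly P (real (a * J + s))\<bar> \<le> C * real (a * J + s) ^ m"
  shows "degree P \<le> m"
proof (rule ccontr)
  assume "\<not> degree P \<le> m"
  then have mD: "m < degree P" by simp
  define D where "D = degree P"
  have "(\<lambda>J. poly P (real a * real J + real s) / real J ^ D) \<longlonglongrightarrow> coeff P D * real a ^ D"
    by (rule lim_poly_seq) (use assms in \<open>auto simp: D_def\<close>)
  then have L1: "(\<lambda>J. poly P (real a * real J + real s) / real J ^ D) \<longlonglongrightarrow> lead_coeff P * real a ^ D"
    by (simp add: D_def)
  have "(\<lambda>J. poly (smult C (monom 1 m)) (real a * real J + real s) / real J ^ D) \<longlonglongrightarrow> coeff (smult C (monom 1 m)) D * real a ^ D"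
    by (rule lim_poly_seq) (use assms mD in \<open>auto simp: D_def degree_monom_eq intro: order.trans[OF degree_smult_le]\<close>)
  then have L2: "(\<lambda>J. C * (real a * real J + real s) ^ m / real J ^ D) \<longlonglongrightarrow> 0"
    using mD by (simp add: poly_monom D_def)
  have "(\<lambda>J. poly P (real a * real J + real s) / real J ^ D) \<longlonglongrightarrow> 0"
  proof (rule tendsto_0_le[OF L2, of _ 1])
    show "eventually (\<lambda>J. norm (poly P (real a * real J + real s) / real J ^ D) \<le> norm (C * (real a * real J + real s) ^ m / real J ^ D) * 1) sequentially"
      using eventually_gt_at_top[of "0::nat"]
    proof eventually_elim
      case (elim J)
      have "\<bar>poly P (real a * real J + real s)\<bar> \<le> C * (real a * real J + real s) ^ m"
        using assms(2)[of J] by (simp add: algebra_simps)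
      then have "\<bar>poly P (real a * real J + real s)\<bar> / real J ^ D \<le> \<bar>C * (real a * real J + real s) ^ m\<bar> / real J ^ D"
        by (intro divide_right_mono) auto
      then show ?case by (simp add: abs_divide)
    qed
  qed
  then have "lead_coeff P * real a ^ D = 0" using L1 LIMSEQ_unique by blast
  moreover have "P \<noteq> 0" using mD by auto
  ultimately show False using assms(1) by simp
qed

lemma mono_lead_eq:
  assumes a: "a \<ge> 1" and mono: "\<And>m n. 1 \<le> m \<Longrightarrow> m \<le> n \<Longrightarrow> f m \<le> f n"
    and q: "qpoly a f" and deg: "\<And>s. s \<in> {1..a} \<Longrightarrow> degree (QP a f s) \<le> D"
    and s: "s \<in> {1..a}" and s': "s' \<in> {1..a}"
  shows "coeff (QP a f s) D = coeff (QP a f s') D"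
proof -
  have le: "coeff (QP a f s1) D \<le> coeff (QP a f s2) D" if s1: "s1 \<in> {1..a}" and s2: "s2 \<in> {1..a}" for s1 s2
  proof -
    have L1: "(\<lambda>J. poly (QP a f s1) (real a * real J + real s1) / real J ^ D) \<longlonglongrightarrow> coeff (QP a f s1) D * real a ^ D"
      by (rule lim_poly_seq) (use a deg s1 in auto)
    have L2: "(\<lambda>J. poly (QP a f s2) (real a * real J + real (a + s2)) / real J ^ D) \<longlonglongrightarrow> coeff (QP a f s2) D * real a ^ D"
      by (rule lim_poly_seq) (use a deg s2 in auto)
    have "coeff (QP a f s1) D * real a ^ D \<le> coeff (QP a f s2) D * real a ^ D"
    proof (rule LIMSEQ_le[OF L1 L2], intro exI allI impI)
      fix J :: nat
      have "f (a * J + s1) \<le> f (a * (Suc J) + s2)" by (rule mono) (use s1 s2 in auto)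
      then have "poly (QP a f s1) (real (a * J + s1)) \<le> poly (QP a f s2) (real (a * Suc J + s2))"
        using QP_eq[OF q s1] QP_eq[OF q s2] by metis
      then have "poly (QP a f s1) (real a * real J + real s1) \<le> poly (QP a f s2) (real a * real J + real (a + s2))"
        by (simp add: algebra_simps)
      then show "poly (QP a f s1) (real a * real J + real s1) / real J ^ D \<le> poly (QP a f s2) (real a * real J + real (a + s2)) / real J ^ D"
        by (intro divide_right_mono) auto
    qed
    then show ?thesis using a by simp
  qed
  show ?thesis using le[OF s s'] le[OF s' s] by simp
qed


lemma g_sum: "g k m = (\<Sum>i<k. real m ^ (k - Suc i) * (real m + 1) ^ i)"
  unfolding g_def using power_diff_sumr2[of "real m + 1" k "real m"] by simp

lemma g_nonneg: "0 \<le> g k m"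
  unfolding g_sum by (intro sum_nonneg) auto

lemma g_mono: "m \<le> m' \<Longrightarrow> g k m \<le> g k m'"
  unfolding g_sum by (intro sum_mono mult_mono power_mono) auto

lemma g_bound: "g k m \<le> real k * (real m + 1) ^ (k - 1)"
proof -
  have "g k m \<le> (\<Sum>i<k. (real m + 1) ^ (k - Suc i) * (real m + 1) ^ i)"
    unfolding g_sum by (intro sum_mono mult_right_mono power_mono) auto
  also have "\<dots> = (\<Sum>i<k. (real m + 1) ^ (k - 1))"
    by (intro sum.cong refl) (auto simp: power_add[symmetric])
  finally show ?thesis by simp
qed

lemma Dg_nonneg: "0 \<le> Dg k j"
  unfolding Dg_def using g_mono[of "j - 1" j k] g_nonneg[of k j] by auto

definition DP :: "nat \<Rightarrow> real poly" where
  "DP k = [:1,1:] ^ k - smult 2 ([:0,1:] ^ k) + [:-1,1:] ^ k"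

lemma Dg_poly: "j \<ge> 1 \<Longrightarrow> Dg k j = poly (DP k) (real j)"
  unfolding Dg_def g_def DP_def by (simp add: of_nat_diff algebra_simps)

lemma Dg_0: "k \<ge> 1 \<Longrightarrow> Dg k 0 = 1"
  unfolding Dg_def g_def by simp

context rider
begin

definition a :: nat where "a = nat (max \<bar>c\<bar> \<bar>d\<bar>)"
definition b :: nat where "b = nat (min \<bar>c\<bar> \<bar>d\<bar>)"

lemma a_ge1: "a \<ge> 1"
  unfolding a_def using nz by auto

lemma b_le_a: "b \<le> a"
  unfolding a_def b_def by auto

definition pk :: "nat \<Rightarrow> nat \<Rightarrow> real" where
  "pk k n = psum (Wn n) (wt n) k"

definition ek :: "nat \<Rightarrow> nat \<Rightarrow> real" where
  "ek q n = esym (Wn n) (wt n) q"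

lemma nat_prod_ab:
  "nat (int n - int j * \<bar>c\<bar>) * nat (int n - int j * \<bar>d\<bar>) = nat (int n - int j * int a) * nat (int n - int j * int b)"
  unfolding a_def b_def by (cases "\<bar>c\<bar> \<le> \<bar>d\<bar>") (auto simp: max_def min_def)

lemma pk_formula:
  assumes "k \<ge> 1"
  shows "pk k n = (\<Sum>j\<le>n. Dg k j * real (nat (int n - int j * int a) * nat (int n - int j * int b)))"
  unfolding pk_def psum_formula[OF assms] nat_prod_ab ..

lemma pk_class:
  assumes k: "k \<ge> 1" and s: "s \<in> {1..a}"
  shows "pk k (a * J + s) = real (a * J + s) ^ 2 +
     (\<Sum>j=1..J. poly (DP k) (real j) * ((real (a * J + s) - real j * real a) * (real (a * J + s) - real j * real b)))"
proof -
  let ?n = "a * J + s"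
  let ?f = "\<lambda>j. Dg k j * real (nat (int ?n - int j * int a) * nat (int ?n - int j * int b))"
  have "1 * J \<le> a * J" by (rule mult_le_mono1[OF a_ge1])
  then have "J \<le> a * J" by simp
  then have Jn: "J \<le> ?n" by linarith
  have zero: "?f j = 0" if "J < j" for j
  proof -
    have "a * (J + 1) \<le> a * j" using that by (intro mult_le_mono2) simp
    then have "a * J + s \<le> j * a" using s by (simp add: algebra_simps)
    then have "int (a * J + s) \<le> int j * int a" by (metis of_nat_le_iff of_nat_mult)
    then show ?thesis by simp
  qed
  have "pk k ?n = (\<Sum>j\<le>?n. ?f j)" by (rule pk_formula[OF k])
  also have "\<dots> = (\<Sum>j\<le>J. ?f j)"
    by (rule sum.mono_neutral_right) (use Jn zero in auto)
  also have "\<dots> = ?f 0 + (\<Sum>j=1..J. ?f j)"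
  proof -
    have "{..J} = insert 0 {1..J}" by auto
    then show ?thesis by simp
  qed
  also have "?f 0 = real ?n ^ 2" using Dg_0[OF k] by (simp add: power2_eq_square)
  also have "(\<Sum>j=1..J. ?f j) = (\<Sum>j=1..J. poly (DP k) (real j) * ((real ?n - real j * real a) * (real ?n - real j * real b)))"
  proof (rule sum.cong[OF refl])
    fix j assume j: "j \<in> {1..J}"
    have "j * a \<le> J * a" using j by (intro mult_le_mono1) simp
    then have "j * a \<le> J * a + s" by linarith
    then have "j * a \<le> ?n" by (simp add: mult.commute)
    then have h1: "int j * int a \<le> int ?n" by (metis of_nat_le_iff of_nat_mult)
    have "j * b \<le> j * a" using b_le_a by (intro mult_le_mono2)
    then have "j * b \<le> ?n" using \<open>j * a \<le> ?n\<close> by linarith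
    then have h2: "int j * int b \<le> int ?n" by (metis of_nat_le_iff of_nat_mult)
    have "real (nat (int ?n - int j * int a) * nat (int ?n - int j * int b)) = (real ?n - real j * real a) * (real ?n - real j * real b)"
      using h1 h2 by (simp add: of_nat_diff)
    then show "?f j = poly (DP k) (real j) * ((real ?n - real j * real a) * (real ?n - real j * real b))"
      using Dg_poly[of j k] j by simp
  qed
  finally show ?thesis .
qed

lemma pk_qpoly:
  assumes k: "k \<ge> 1"
  shows "qpoly a (pk k)"
proof (rule qpoly_from_polyJ[OF a_ge1])
  fix s assume s: "s \<in> {1..a}"
  define X where "X J = real (a * J + s)" for J
  have XJ: "polyJ X" unfolding X_def
    using polyJ_add[OF polyJ_mult[OF polyJ_const[of "real a"] polyJ_id] polyJ_const[of "real s"]] by simp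
  have eq: "pk k (a * J + s) = X J ^ 2 + (X J ^ 2 * (\<Sum>j=1..J. poly (DP k) (real j))
       - (real a + real b) * X J * (\<Sum>j=1..J. poly ([:0,1:] * DP k) (real j))
       + real a * real b * (\<Sum>j=1..J. poly ([:0,0,1:] * DP k) (real j)))" for J
  proof -
    have trm: "poly (DP k) (real j) * ((X J - real j * real a) * (X J - real j * real b))
      = X J ^ 2 * poly (DP k) (real j) - (real a + real b) * X J * poly ([:0,1:] * DP k) (real j)
        + real a * real b * poly ([:0,0,1:] * DP k) (real j)" for j
      by (simp add: algebra_simps power2_eq_square)
    have "pk k (a * J + s) = X J ^ 2 + (\<Sum>j=1..J. poly (DP k) (real j) * ((X J - real j * real a) * (X J - real j * real b)))"
      unfolding pk_class[OF k s] X_def ..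
    also have "(\<Sum>j=1..J. poly (DP k) (real j) * ((X J - real j * real a) * (X J - real j * real b)))
      = (\<Sum>j=1..J. X J ^ 2 * poly (DP k) (real j) - (real a + real b) * X J * poly ([:0,1:] * DP k) (real j)
        + real a * real b * poly ([:0,0,1:] * DP k) (real j))"
      using trm by simp
    also have "\<dots> = X J ^ 2 * (\<Sum>j=1..J. poly (DP k) (real j))
       - (real a + real b) * X J * (\<Sum>j=1..J. poly ([:0,1:] * DP k) (real j))
       + real a * real b * (\<Sum>j=1..J. poly ([:0,0,1:] * DP k) (real j))"
      by (simp only: sum.distrib sum_subtractf sum_distrib_left)
    finally show ?thesis .
  qed
  show "polyJ (\<lambda>J. pk k (a * J + s))"
    unfolding eq
    by (intro polyJ_add polyJ_diff polyJ_mult polyJ_power polyJ_const XJ faulhaber)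
qed

lemma psum_board:
  assumes "k \<ge> 1"
  shows "pk k n = (\<Sum>z\<in>board n. g k (rho n z))"
proof -
  have "pk k n = (\<Sum>w\<in>Wn n. \<Sum>z\<in>fib n w. g k (rho n z))"
    unfolding pk_def psum_def using fiber_sum[OF assms] by simp
  also have "\<dots> = (\<Sum>z\<in>board n. g k (rho n z))"
    unfolding fib_def Wn_def
    by (rule sum.group) (auto simp: finite_board)
  finally show ?thesis .
qed

lemma card_board: "card (board n) = n * n"
  by (simp add: board_def card_cartesian_product)

lemma pk_growth:
  assumes "k \<ge> 1"
  shows "\<bar>pk k n\<bar> \<le> real k * real n ^ (k + 1)"
proof -
  have "\<bar>pk k n\<bar> = (\<Sum>z\<in>board n. g k (rho n z))"
    using psum_board[OF assms] g_nonneg by (simp add: sum_nonneg)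
  also have "\<dots> \<le> (\<Sum>z\<in>board n. real k * real n ^ (k - 1))"
  proof (rule sum_mono)
    fix z assume z: "z \<in> board n"
    have "real (rho n z) + 1 \<le> real n" using rho_lt[OF z] by linarith
    then have "(real (rho n z) + 1) ^ (k - 1) \<le> real n ^ (k - 1)" by (intro power_mono) auto
    then show "g k (rho n z) \<le> real k * real n ^ (k - 1)"
      using g_bound[of k "rho n z"] by (meson mult_left_mono of_nat_0_le_iff order_trans)
  qed
  also have "\<dots> = real k * real n ^ (k + 1)"
  proof -
    obtain k' where k': "k = Suc k'" using assms by (cases k) auto
    show ?thesis by (simp add: card_board k' algebra_simps)
  qed
  finally show ?thesis .
qed

lemma pk_mono:
  assumes "k \<ge> 1" "m \<le> n"
  shows "pk k m \<le> pk k n"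
proof -
  have "pk k m = (\<Sum>j\<le>m. Dg k j * real (nat (int m - int j * int a) * nat (int m - int j * int b)))"
    by (rule pk_formula[OF assms(1)])
  also have "\<dots> \<le> (\<Sum>j\<le>m. Dg k j * real (nat (int n - int j * int a) * nat (int n - int j * int b)))"
    using assms(2) by (intro sum_mono mult_left_mono Dg_nonneg) (auto intro!: mult_mono)
  also have "\<dots> \<le> (\<Sum>j\<le>n. Dg k j * real (nat (int n - int j * int a) * nat (int n - int j * int b)))"
    using assms(2) by (intro sum_mono2) (auto intro!: Dg_nonneg mult_nonneg_nonneg)
  also have "\<dots> = pk k n" by (rule pk_formula[OF assms(1), symmetric])
  finally show ?thesis .
qed

end


lemma sumA:
  fixes x a b :: real
  shows "(\<Sum>j=1..J. (x - real j * a) * (x - real j * b)) = x^2 * real J - (a + b) * x * real J * (real J + 1) / 2 + a * b * real J * (real J + 1) * (2 * real J + 1) / 6"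
  by (induction J) (simp_all add: field_simps power2_eq_square)

lemma sumB:
  fixes x a b :: real
  shows "(\<Sum>j=1..J. real j * ((x - real j * a) * (x - real j * b))) = x^2 * real J * (real J + 1) / 2 - (a + b) * x * real J * (real J + 1) * (2 * real J + 1) / 6 + a * b * (real J * (real J + 1) / 2)^2"
  by (induction J) (simp_all add: field_simps power2_eq_square)

definition W2 :: "real \<Rightarrow> real \<Rightarrow> real \<Rightarrow> real poly" where
  "W2 a b s = [: -2/3 * b * s^3 / a^2 + b * s^2 / a - b * s / 3,
                 b * s^2 / a^2 - s^2 / a - b * s / a + s + b / 3,
                 0, 1 / a - b / (3 * a^2) :]"

definition W3 :: "real \<Rightarrow> real \<Rightarrow> real \<Rightarrow> real poly" where
  "W3 a b s = [: 3/2 * b * s^4 / a^3 - 3 * b * s^3 / a^2 + 3/2 * b * s^2 / a,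
                 -4 * b * s^3 / a^3 + 2 * s^3 / a^2 + 6 * b * s^2 / a^2 - 3 * s^2 / a - 2 * b * s / a + s,
                 3 * b * s^2 / a^3 - 3 * s^2 / a^2 - 3 * b * s / a^2 + 3 * s / a + b / (2 * a),
                 0, 1 / a^2 - b / (2 * a^3) :]"

lemma W2_eq:
  fixes a b s J :: real
  assumes "a \<noteq> 0"
  shows "(a*J+s)^2 + 2 * ((a*J+s)^2 * J - (a + b) * (a*J+s) * J * (J + 1) / 2 + a * b * J * (J + 1) * (2 * J + 1) / 6) = poly (W2 a b s) (a*J+s)"
  using assms unfolding W2_def by (simp add: field_simps power2_eq_square power3_eq_cube)

lemma W3_eq:
  fixes a b s J :: real
  assumes "a \<noteq> 0"
  shows "(a*J+s)^2 + 6 * ((a*J+s)^2 * J * (J + 1) / 2 - (a + b) * (a*J+s) * J * (J + 1) * (2 * J + 1) / 6 + a * b * (J * (J + 1) / 2)^2) = poly (W3 a b s) (a*J+s)"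
  using assms unfolding W3_def by (simp add: field_simps power2_eq_square power3_eq_cube) (simp add: algebra_simps power2_eq_square power3_eq_cube eval_nat_numeral)


context rider
begin

definition EP :: "nat \<Rightarrow> nat \<Rightarrow> real poly" where "EP q s = QP a (ek q) s"
definition PP :: "nat \<Rightarrow> nat \<Rightarrow> real poly" where "PP k s = QP a (pk k) s"

lemma ek_0: "ek 0 n = 1"
  unfolding ek_def by (rule esym_0[OF finite_Wn])

lemma newton_fun:
  "ek (Suc m) n = (\<Sum>i<Suc m. (-1)^i * ek (m - i) n * pk (Suc i) n) / real (Suc m)"
  using newton[OF finite_Wn, of m n "wt n"] unfolding ek_def pk_def
  by (simp add: field_simps del: of_nat_Suc)

lemma ek_qpoly: "qpoly a (ek q)"
proof (induction q rule: less_induct)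
  case (less q)
  show ?case
  proof (cases q)
    case 0
    then show ?thesis using qpoly_const[of a 1] by (simp add: ek_0)
  next
    case (Suc m)
    have "qpoly a (\<lambda>n. (\<Sum>i<Suc m. (-1)^i * ek (m - i) n * pk (Suc i) n) * (1 / real (Suc m)))"
      by (intro qpoly_mult qpoly_sum qpoly_const pk_qpoly less) (auto simp: Suc)
    then show ?thesis using Suc by (simp add: newton_fun)
  qed
qed

lemma EP_0: "EP 0 s = 1"
proof -
  have "ek 0 = (\<lambda>n. 1)" by (rule ext) (simp add: ek_0)
  then show ?thesis unfolding EP_def using QP_const[OF a_ge1, of 1 s] by (simp add: one_pCons)
qed

lemma EP_rec:
  assumes s: "s \<in> {1..a}"
  shows "EP (Suc m) s = smult (1 / real (Suc m)) (\<Sum>i<Suc m. smult ((-1)^i) (EP (m - i) s * PP (Suc i) s))"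
  unfolding EP_def
proof (rule QP_unique[OF a_ge1])
  fix J
  show "ek (Suc m) (a * J + s) = poly (smult (1 / real (Suc m)) (\<Sum>i<Suc m. smult ((-1)^i) (QP a (ek (m - i)) s * PP (Suc i) s))) (real (a * J + s))"
    unfolding newton_fun PP_def
    using QP_eq[OF ek_qpoly s] QP_eq[OF pk_qpoly s]
    by (simp add: poly_sum field_simps del: of_nat_Suc)
qed

lemma PP_1: "s \<in> {1..a} \<Longrightarrow> PP 1 s = monom 1 2"
  unfolding PP_def
proof (rule QP_unique[OF a_ge1])
  fix J assume s: "s \<in> {1..a}"
  have "poly (DP 1) y = 0" for y by (simp add: DP_def)
  then show "pk 1 (a * J + s) = poly (monom 1 2) (real (a * J + s))"
    using pk_class[of 1 s J] s by (simp add: poly_monom)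
qed

lemma PP_deg: "k \<ge> 1 \<Longrightarrow> s \<in> {1..a} \<Longrightarrow> degree (PP k s) \<le> k + 1"
  unfolding PP_def
  by (rule degree_from_growth[OF a_ge1, of _ s "real k"])
     (metis QP_eq pk_qpoly pk_growth)

lemma PP_lead: "k \<ge> 1 \<Longrightarrow> s \<in> {1..a} \<Longrightarrow> s' \<in> {1..a} \<Longrightarrow> coeff (PP k s) (k + 1) = coeff (PP k s') (k + 1)"
proof -
  assume k: "k \<ge> 1" and s: "s \<in> {1..a}" and s': "s' \<in> {1..a}"
  have deg: "degree (QP a (pk k) sa) \<le> k + 1" if "sa \<in> {1..a}" for sa
    using PP_deg[OF k that] by (simp add: PP_def)
  show ?thesis unfolding PP_def
    by (rule mono_lead_eq[OF a_ge1 _ pk_qpoly[OF k] deg s s']) (auto intro: pk_mono k)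
qed

lemma PP_2: "s \<in> {1..a} \<Longrightarrow> PP 2 s = W2 (real a) (real b) (real s)"
  unfolding PP_def
proof (rule QP_unique[OF a_ge1])
  fix J assume s: "s \<in> {1..a}"
  have "poly (DP 2) y = 2" for y by (simp add: DP_def algebra_simps power2_eq_square)
  then have "pk 2 (a * J + s) = real (a * J + s) ^ 2 + 2 * (\<Sum>j=1..J. (real (a * J + s) - real j * real a) * (real (a * J + s) - real j * real b))"
    using pk_class[of 2 s J] s by (simp add: sum_distrib_left)
  also have "\<dots> = poly (W2 (real a) (real b) (real s)) (real a * real J + real s)"
    unfolding sumA using W2_eq[of "real a" "real J" "real s" "real b"] a_ge1 by simp
  finally show "pk 2 (a * J + s) = poly (W2 (real a) (real b) (real s)) (real (a * J + s))" by simp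
qed

lemma PP_3: "s \<in> {1..a} \<Longrightarrow> PP 3 s = W3 (real a) (real b) (real s)"
  unfolding PP_def
proof (rule QP_unique[OF a_ge1])
  fix J assume s: "s \<in> {1..a}"
  have "poly (DP 3) y = 6 * y" for y by (simp add: DP_def algebra_simps power3_eq_cube)
  then have "pk 3 (a * J + s) = real (a * J + s) ^ 2 + 6 * (\<Sum>j=1..J. real j * ((real (a * J + s) - real j * real a) * (real (a * J + s) - real j * real b)))"
    using pk_class[of 3 s J] s by (simp add: sum_distrib_left mult.assoc)
  also have "\<dots> = poly (W3 (real a) (real b) (real s)) (real a * real J + real s)"
    unfolding sumB using W3_eq[of "real a" "real J" "real s" "real b"] a_ge1 by simp
  finally show "pk 3 (a * J + s) = poly (W3 (real a) (real b) (real s)) (real (a * J + s))" by simp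
qed

end


definition dle :: "real poly \<Rightarrow> int \<Rightarrow> bool" where
  "dle X m \<longleftrightarrow> (\<forall>i. int i > m \<longrightarrow> coeff X i = 0)"

lemma dle_0[simp]: "dle 0 m" by (simp add: dle_def)
lemma dle_add: "dle X m \<Longrightarrow> dle Y m \<Longrightarrow> dle (X + Y) m" by (simp add: dle_def)
lemma dle_diff: "dle X m \<Longrightarrow> dle Y m \<Longrightarrow> dle (X - Y) m" by (simp add: dle_def)
lemma dle_uminus: "dle X m \<Longrightarrow> dle (- X) m" by (simp add: dle_def)
lemma dle_smult: "dle X m \<Longrightarrow> dle (smult c X) m" by (simp add: dle_def)
lemma dle_mono: "dle X m \<Longrightarrow> m \<le> m' \<Longrightarrow> dle X m'" by (simp add: dle_def)
lemma dle_degree: "degree X \<le> n \<Longrightarrow> dle X (int n)"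
  by (auto simp: dle_def intro: coeff_eq_0)
lemma dle_monom: "dle (monom c n) (int n)"
  by (rule dle_degree) (simp add: degree_monom_le)
lemma dle_sum: "finite A \<Longrightarrow> (\<And>i. i \<in> A \<Longrightarrow> dle (F i) m) \<Longrightarrow> dle (\<Sum>i\<in>A. F i) m"
  by (induction A rule: finite_induct) (auto intro: dle_add)

lemma dle_mult:
  assumes "dle X m1" "dle Y m2"
  shows "dle (X * Y) (m1 + m2)"
  unfolding dle_def
proof (intro allI impI)
  fix i assume i: "int i > m1 + m2"
  have "coeff X j * coeff Y (i - j) = 0" if "j \<le> i" for j
  proof (cases "int j > m1")
    case True then show ?thesis using assms(1) by (simp add: dle_def)
  next
    case False
    then have "int (i - j) > m2" using i that by (simp add: of_nat_diff)
    then show ?thesis using assms(2) by (simp add: dle_def)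
  qed
  then show "coeff (X * Y) i = 0" unfolding coeff_mult by (intro sum.neutral) auto
qed

lemma coeff_mult_top:
  assumes "dle X (int n1)" "dle Y (int n2)"
  shows "coeff (X * Y) (n1 + n2) = coeff X n1 * coeff Y n2"
proof -
  have z: "coeff X j * coeff Y (n1 + n2 - j) = 0" if "j \<le> n1 + n2" "j \<noteq> n1" for j
  proof (cases "j > n1")
    case True then show ?thesis using assms(1) by (simp add: dle_def)
  next
    case False
    then have "n1 + n2 - j > n2" using that by simp
    then show ?thesis using assms(2) by (simp add: dle_def)
  qed
  have "coeff (X * Y) (n1 + n2) = (\<Sum>j\<le>n1 + n2. coeff X j * coeff Y (n1 + n2 - j))"
    by (simp add: coeff_mult)
  also have "\<dots> = coeff X n1 * coeff Y (n1 + n2 - n1) + (\<Sum>j\<in>{..n1 + n2} - {n1}. coeff X j * coeff Y (n1 + n2 - j))"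
    by (rule sum.remove) auto
  also have "(\<Sum>j\<in>{..n1 + n2} - {n1}. coeff X j * coeff Y (n1 + n2 - j)) = 0"
    by (rule sum.neutral) (use z in auto)
  finally show ?thesis by simp
qed

lemma dle_top:
  assumes "dle X (int n)"
  shows "dle (X - smult (coeff X n) (monom 1 n)) (int n - 1)"
  using assms unfolding dle_def by (auto simp: coeff_monom)

lemma dle_eq_top:
  assumes "dle X (int n + 1)" "dle Y (int n + 1)" "coeff X (Suc n) = coeff Y (Suc n)"
  shows "dle (X - Y) (int n)"
  unfolding dle_def
proof (intro allI impI)
  fix i assume i: "int n < int i"
  show "coeff (X - Y) i = 0"
  proof (cases "i = Suc n")
    case True then show ?thesis using assms(3) by simp
  next
    case False
    then have "int i > int n + 1" using i by simp
    then show ?thesis using assms(1,2) by (simp add: dle_def)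
  qed
qed

lemma coeff_dle_zero: "dle X m \<Longrightarrow> int i > m \<Longrightarrow> coeff X i = 0"
  by (simp add: dle_def)


context rider
begin

definition sig :: "nat \<Rightarrow> real" where
  "sig q = (if q \<ge> 2 then 1 / (2 * fact (q - 2)) else 0)"

definition pii :: "nat \<Rightarrow> real" where
  "pii s = coeff (PP 2 s) 1"

lemma PP_dle: "k \<ge> 1 \<Longrightarrow> s \<in> {1..a} \<Longrightarrow> dle (PP k s) (int k + 1)"
proof -
  assume "k \<ge> 1" "s \<in> {1..a}"
  then have "dle (PP k s) (int (k + 1))" by (rule dle_degree[OF PP_deg])
  then show ?thesis by (simp add: add.commute)
qed

lemma PP_dev_big:
  assumes "k \<ge> 4" "s \<in> {1..a}" "s' \<in> {1..a}"
  shows "dle (PP k s - PP k s') (int k)"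
  by (rule dle_eq_top) (use assms PP_dle PP_lead[of k s s'] in auto)

lemma PP3_dev:
  assumes "s \<in> {1..a}" "s' \<in> {1..a}"
  shows "dle (PP 3 s - PP 3 s') 2"
  unfolding PP_3[OF assms(1)] PP_3[OF assms(2)] dle_def
proof (intro allI impI)
  fix i :: nat assume "2 < int i"
  then have "i \<ge> 3" by linarith
  then have "i = Suc (Suc (Suc (i - 3)))" by simp
  then obtain j where "i = Suc (Suc (Suc j))" by blast
  then show "coeff (W3 (real a) (real b) (real s) - W3 (real a) (real b) (real s')) i = 0"
    by (cases j) (auto simp: W3_def coeff_pCons split: nat.splits)
qed

lemma PP2_dev:
  assumes "s \<in> {1..a}" "s' \<in> {1..a}"
  shows "dle (PP 2 s - PP 2 s' - smult (pii s - pii s') (monom 1 1)) 0"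
  unfolding pii_def PP_2[OF assms(1)] PP_2[OF assms(2)] dle_def
proof (intro allI impI)
  fix i :: nat assume "0 < int i"
  then obtain j where "i = Suc j" by (cases i) auto
  then show "coeff (W2 (real a) (real b) (real s) - W2 (real a) (real b) (real s') - smult (coeff (W2 (real a) (real b) (real s)) 1 - coeff (W2 (real a) (real b) (real s')) 1) (monom 1 1)) i = 0"
    by (cases j) (auto simp: W2_def coeff_pCons coeff_monom split: nat.splits)
qed

lemma PP2_dle1:
  assumes "s \<in> {1..a}" "s' \<in> {1..a}"
  shows "dle (PP 2 s - PP 2 s') 1"
proof -
  have "PP 2 s - PP 2 s' = (PP 2 s - PP 2 s' - smult (pii s - pii s') (monom 1 1)) + smult (pii s - pii s') (monom 1 1)"
    by simp
  moreover have "dle (smult (pii s - pii s') (monom 1 1)) 1"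
    using dle_smult[OF dle_monom[of 1 1]] by simp
  moreover have "dle (PP 2 s - PP 2 s' - smult (pii s - pii s') (monom 1 1)) 1"
    using dle_mono[OF PP2_dev[OF assms]] by simp
  ultimately show ?thesis using dle_add by metis
qed

definition MainP :: "nat \<Rightarrow> bool" where
  "MainP q \<longleftrightarrow> (\<forall>s\<in>{1..a}. \<forall>s'\<in>{1..a}.
      dle (EP q s) (2 * int q) \<and> coeff (EP q s) (2 * q) = 1 / fact q \<and>
      dle (EP q s - EP q s' - smult (- sig q * (pii s - pii s')) (monom 1 (2 * q - 3))) (2 * int q - 4))"

lemma MainP_dev:
  assumes "MainP r" "s \<in> {1..a}" "s' \<in> {1..a}"
  shows "dle (EP r s - EP r s') (2 * int r - 3)"
proof -
  let ?T = "smult (- sig r * (pii s - pii s')) (monom 1 (2 * r - 3))"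
  have "dle (EP r s - EP r s' - ?T) (2 * int r - 4)"
    using assms unfolding MainP_def by blast
  then have R: "dle (EP r s - EP r s' - ?T) (2 * int r - 3)" by (rule dle_mono) simp
  have T: "dle ?T (2 * int r - 3)"
  proof (cases "r \<ge> 2")
    case True
    then have "int (2 * r - 3) = 2 * int r - 3" by simp
    then have "dle (smult (sig r * (pii s - pii s')) (monom 1 (2 * r - 3))) (2 * int r - 3)"
      using dle_smult[OF dle_monom[of 1 "2 * r - 3"]] by simp
    then show ?thesis by (simp add: dle_uminus)
  next
    case False then show ?thesis by (simp add: sig_def)
  qed
  have "EP r s - EP r s' = (EP r s - EP r s' - ?T) + ?T" by simp
  then show ?thesis using dle_add[OF R T] by simp
qed

lemma MainP_decomp:
  assumes "MainP r" "s \<in> {1..a}"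
  shows "dle (EP r s - smult (1 / fact r) (monom 1 (2 * r))) (2 * int r - 1)"
proof -
  have "dle (EP r s) (int (2 * r))" using assms unfolding MainP_def by auto
  from dle_top[OF this] show ?thesis using assms unfolding MainP_def by auto
qed

lemma MainP_0: "MainP 0"
  unfolding MainP_def by (auto simp: EP_0 sig_def dle_def)

end


context rider
begin

definition FF :: "nat \<Rightarrow> nat \<Rightarrow> nat \<Rightarrow> real poly" where
  "FF t m i = smult ((-1)^i) (EP (m - i) t * PP (Suc i) t)"

definition tau :: "nat \<Rightarrow> nat \<Rightarrow> real \<Rightarrow> real" where
  "tau m i D = (if i = 0 then - sig m * D else if i = 1 then - D / fact (m - 1) else 0)"

lemma arith_tau:
  fixes F y D :: real
  assumes "F > 0" "y > 0"
  shows "- D / (2 * F) + - D / (y * F) = - ((y + 2) * (1 / (2 * (y * F))) * D)"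
  using assms by (simp add: field_simps)

lemma sum_tau: "(\<Sum>i<Suc m. tau m i D) = - (real (Suc m) * sig (Suc m) * D)"
proof (cases m)
  case 0 then show ?thesis by (simp add: tau_def sig_def)
next
  case (Suc m')
  have "(\<Sum>i<Suc m. tau m i D) = tau m 0 D + tau m 1 D + (\<Sum>i<m'. tau m (Suc (Suc i)) D)"
    unfolding Suc by (simp add: sum.lessThan_Suc_shift del: sum.lessThan_Suc)
  also have "(\<Sum>i<m'. tau m (Suc (Suc i)) D) = 0" by (simp add: tau_def)
  finally have 1: "(\<Sum>i<Suc m. tau m i D) = tau m 0 D + tau m 1 D" by simp
  show ?thesis
  proof (cases m')
    case 0 then show ?thesis using 1 Suc by (simp add: tau_def sig_def)
  next
    case (Suc m'')
    have mm: "m = Suc (Suc m'')" using \<open>m = Suc m'\<close> Suc by simp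
    have f: "fact (Suc m'') = real (Suc m'') * (fact m'' :: real)" by simp
    have t0: "tau m 0 D = - D / (2 * fact m'')" by (simp add: tau_def sig_def mm)
    have t1: "tau m 1 D = - D / (real (Suc m'') * fact m'')" by (simp add: tau_def mm f)
    have sq: "sig (Suc m) = 1 / (2 * (real (Suc m'') * fact m''))" by (simp add: sig_def mm f)
    have pos: "(fact m'' :: real) > 0" by simp
    have rs: "real (Suc m) = real (Suc m'') + 2" by (simp add: mm)
    show ?thesis unfolding 1 t0 t1 sq rs by (rule arith_tau[OF pos]) simp
  qed
qed

lemma per_i:
  assumes IH: "\<And>r. r \<le> m \<Longrightarrow> MainP r" and s: "s \<in> {1..a}" and s': "s' \<in> {1..a}" and i: "i < Suc m"
  shows "dle (FF s m i - FF s' m i - smult (tau m i (pii s - pii s')) (monom 1 (2 * m - 1))) (2 * int m - 2)"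
proof -
  let ?D = "pii s - pii s'"
  consider "i = 0" | "i = 1" | "i \<ge> 2" by linarith
  then show ?thesis
  proof cases
    case 1
    let ?T = "smult (- sig m * ?D) (monom 1 (2 * m - 3))"
    define R where "R = EP m s - EP m s' - ?T"
    have R: "dle R (2 * int m - 4)" using IH[of m] s s' unfolding R_def MainP_def by blast
    have eq1: "FF s m i - FF s' m i = (R + ?T) * monom 1 2"
      using 1 PP_1[OF s] PP_1[OF s'] by (simp add: FF_def R_def algebra_simps)
    have eq2: "?T * monom 1 2 = smult (tau m i ?D) (monom 1 (2 * m - 1))"
    proof (cases "m \<ge> 2")
      case True
      then have "2 * m - 3 + 2 = 2 * m - 1" by simp
      then show ?thesis using 1 by (simp add: tau_def mult_monom)
    next
      case False then show ?thesis using 1 by (simp add: tau_def sig_def)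
    qed
    have "FF s m i - FF s' m i - smult (tau m i ?D) (monom 1 (2 * m - 1)) = R * monom 1 2"
      using eq1 eq2 by (simp add: algebra_simps)
    moreover have "dle (R * monom 1 2) (2 * int m - 4 + int 2)" by (rule dle_mult[OF R dle_monom])
    ultimately show ?thesis by simp
  next
    case 2
    then have m1: "m \<ge> 1" using i by simp
    define E where "E = EP (m - 1) s"
    define E' where "E' = EP (m - 1) s'"
    define P where "P = PP 2 s"
    define P' where "P' = PP 2 s'"
    define C1 where "C1 = smult (1 / fact (m - 1)) (monom (1::real) (2 * (m - 1)))"
    define C2 where "C2 = smult ?D (monom (1::real) 1)"
    define R1 where "R1 = E' - C1"
    define R2 where "R2 = P - P' - C2"
    have R1: "dle R1 (2 * int (m - 1) - 1)"
      using MainP_decomp[OF IH[of "m - 1"] s'] unfolding R1_def E'_def C1_def by simp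
    have R2: "dle R2 0" using PP2_dev[OF s s'] unfolding R2_def P_def P'_def C2_def by simp
    have C12: "C1 * C2 = smult (?D / fact (m - 1)) (monom 1 (2 * m - 1))"
    proof -
      have "2 * (m - 1) + 1 = 2 * m - 1" using m1 by simp
      then show ?thesis unfolding C1_def C2_def by (simp add: mult_monom)
    qed
    have FFd: "FF s m i - FF s' m i = - (E * P - E' * P')"
      using 2 unfolding FF_def E_def E'_def P_def P'_def by (simp add: algebra_simps numeral_2_eq_2)
    have tm: "smult (tau m i ?D) (monom 1 (2 * m - 1)) = - (C1 * C2)"
    proof -
      have "tau m i ?D = - (?D / fact (m - 1))" using 2 by (simp add: tau_def minus_divide_left)
      then show ?thesis by (simp only: smult_minus_left C12)
    qed
    have key: "FF s m i - FF s' m i - smult (tau m i ?D) (monom 1 (2 * m - 1))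
       = - ((E - E') * P) - C1 * R2 - R1 * (P - P')"
      unfolding FFd tm R1_def R2_def by (simp add: algebra_simps)
    have d1: "dle ((E - E') * P) ((2 * int (m - 1) - 3) + (int 2 + 1))"
      by (rule dle_mult) (use MainP_dev[OF IH[of "m - 1"] s s'] PP_dle[of 2 s] s in \<open>auto simp: E_def E'_def P_def\<close>)
    have d2: "dle (C1 * R2) (int (2 * (m - 1)) + 0)"
      unfolding C1_def by (rule dle_mult[OF dle_smult[OF dle_monom] R2])
    have d3: "dle (R1 * (P - P')) ((2 * int (m - 1) - 1) + 1)"
      by (rule dle_mult[OF R1]) (use PP2_dle1[OF s s'] in \<open>simp add: P_def P'_def\<close>)
    have "int (m - 1) = int m - 1" using m1 by simp
    then have "dle (- ((E - E') * P) - C1 * R2 - R1 * (P - P')) (2 * int m - 2)"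
      using d1 d2 d3 by (auto intro!: dle_diff dle_uminus elim!: dle_mono)
    then show ?thesis using key by simp
  next
    case 3
    then have m2: "m \<ge> 2" and im: "i \<le> m" using i by auto
    define E where "E = EP (m - i) s"
    define E' where "E' = EP (m - i) s'"
    define P where "P = PP (Suc i) s"
    define P' where "P' = PP (Suc i) s'"
    have FFd: "FF s m i - FF s' m i = smult ((-1)^i) ((E - E') * P + E' * (P - P'))"
      unfolding FF_def E_def E'_def P_def P'_def by (simp add: algebra_simps smult_diff_right)
    have tz: "tau m i ?D = 0" using 3 by (simp add: tau_def)
    have mi: "int (m - i) = int m - int i" using im by simp
    have d1: "dle ((E - E') * P) ((2 * int (m - i) - 3) + (int (Suc i) + 1))"
      by (rule dle_mult) (use MainP_dev[OF IH[of "m - i"] s s'] PP_dle[of "Suc i" s] s in \<open>auto simp: E_def E'_def P_def\<close>)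
    have d2: "dle (E' * (P - P')) (2 * int m - 2)"
    proof (cases "i = 2")
      case True
      have "dle (E' * (P - P')) (2 * int (m - i) + 2)"
        by (rule dle_mult) (use IH[of "m - i"] s' PP3_dev[OF s s'] True in \<open>auto simp: MainP_def E'_def P_def P'_def\<close>)
      then show ?thesis using mi True by (auto elim: dle_mono)
    next
      case False
      then have "Suc i \<ge> 4" using 3 by simp
      have "dle (E' * (P - P')) (2 * int (m - i) + int (Suc i))"
        by (rule dle_mult) (use IH[of "m - i"] s' PP_dev_big[OF \<open>Suc i \<ge> 4\<close> s s'] in \<open>auto simp: MainP_def E'_def P_def P'_def\<close>)
      then show ?thesis using mi False 3 by (auto elim: dle_mono)
    qed
    have "dle ((E - E') * P + E' * (P - P')) (2 * int m - 2)"
      using d1 d2 mi 3 by (auto intro!: dle_add elim!: dle_mono)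
    then show ?thesis using FFd tz by (simp add: dle_smult)
  qed
qed

end


context rider
begin

lemma MainP_Suc:
  assumes IH: "\<And>r. r \<le> m \<Longrightarrow> MainP r"
  shows "MainP (Suc m)"
  unfolding MainP_def
proof (intro ballI)
  fix s s' assume s: "s \<in> {1..a}" and s': "s' \<in> {1..a}"
  have rec: "EP (Suc m) t = smult (1 / real (Suc m)) (\<Sum>i<Suc m. FF t m i)" if "t \<in> {1..a}" for t
    using EP_rec[OF that, of m] by (simp add: FF_def)
  have dE: "dle (EP r t) (2 * int r)" if "r \<le> m" "t \<in> {1..a}" for r t
    using IH[OF that(1)] that(2) s unfolding MainP_def by blast
  have cE: "coeff (EP r t) (2 * r) = 1 / fact r" if "r \<le> m" "t \<in> {1..a}" for r t
    using IH[OF that(1)] that(2) s unfolding MainP_def by blast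
  have dF: "dle (FF t m i) (2 * int m - int i + 2)" if "i < Suc m" "t \<in> {1..a}" for i t
  proof -
    have "dle (EP (m - i) t * PP (Suc i) t) (2 * int (m - i) + (int (Suc i) + 1))"
      by (rule dle_mult[OF dE PP_dle]) (use that in auto)
    moreover have "2 * int (m - i) + (int (Suc i) + 1) = 2 * int m - int i + 2" using that by simp
    ultimately have "dle (EP (m - i) t * PP (Suc i) t) (2 * int m - int i + 2)" by metis
    then show ?thesis unfolding FF_def by (rule dle_smult)
  qed
  have part1: "dle (EP (Suc m) s) (2 * int (Suc m))"
    unfolding rec[OF s]
    by (intro dle_smult dle_sum) (auto intro: dle_mono[OF dF[OF _ s]])
  have part2: "coeff (EP (Suc m) s) (2 * Suc m) = 1 / fact (Suc m)"
  proof -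
    have c0: "coeff (FF s m 0) (2 * Suc m) = 1 / fact m"
    proof -
      have "FF s m 0 = EP m s * monom 1 2" using PP_1[OF s] by (simp add: FF_def)
      moreover have "coeff (EP m s * monom 1 2) (2 * m + 2) = coeff (EP m s) (2 * m) * coeff (monom (1::real) 2) 2"
        by (rule coeff_mult_top) (use dE[of m s] s dle_monom[of 1 2] in auto)
      ultimately show ?thesis using cE[of m s] s by simp
    qed
    have cz: "coeff (FF s m (Suc i)) (2 * Suc m) = 0" if "i < m" for i
      by (rule coeff_dle_zero[OF dF[of "Suc i" s]]) (use that s in auto)
    have "coeff (EP (Suc m) s) (2 * Suc m) = (1 / real (Suc m)) * (\<Sum>i<Suc m. coeff (FF s m i) (2 * Suc m))"
      unfolding rec[OF s] by (simp add: coeff_sum)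
    also have "(\<Sum>i<Suc m. coeff (FF s m i) (2 * Suc m)) = 1 / fact m"
    proof -
      have z: "(\<Sum>i<m. coeff (FF s m (Suc i)) (2 * Suc m)) = 0" by (rule sum.neutral) (use cz in auto)
      show ?thesis by (simp only: sum.lessThan_Suc_shift c0 z)
    qed
    finally show ?thesis by (simp add: field_simps)
  qed
  let ?D = "pii s - pii s'"
  let ?M = "monom (1::real) (2 * m - 1)"
  have eq: "EP (Suc m) s - EP (Suc m) s' - smult (- sig (Suc m) * ?D) (monom 1 (2 * Suc m - 3))
      = smult (1 / real (Suc m)) (\<Sum>i<Suc m. FF s m i - FF s' m i - smult (tau m i ?D) ?M)"
  proof -
    have idx: "2 * Suc m - 3 = 2 * m - 1" by simp
    have "(\<Sum>i<Suc m. smult (tau m i ?D) ?M) = smult (\<Sum>i<Suc m. tau m i ?D) ?M"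
      by (rule smult_sum[symmetric])
    also have "\<dots> = smult (- (real (Suc m) * sig (Suc m) * ?D)) ?M" by (simp only: sum_tau)
    finally have "smult (1 / real (Suc m)) (\<Sum>i<Suc m. smult (tau m i ?D) ?M) = smult (1 / real (Suc m) * (- (real (Suc m) * sig (Suc m) * ?D))) ?M"
      by simp
    also have "1 / real (Suc m) * (- (real (Suc m) * sig (Suc m) * ?D)) = - sig (Suc m) * ?D"
      by (simp del: of_nat_Suc)
    finally have "smult (1 / real (Suc m)) (\<Sum>i<Suc m. smult (tau m i ?D) ?M) = smult (- sig (Suc m) * ?D) ?M" .
    then show ?thesis
      unfolding rec[OF s] rec[OF s'] idx
      by (simp add: sum_subtractf smult_diff_right)
  qed
  have part3: "dle (EP (Suc m) s - EP (Suc m) s' - smult (- sig (Suc m) * ?D) (monom 1 (2 * Suc m - 3))) (2 * int (Suc m) - 4)"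
  proof -
    have "dle (\<Sum>i<Suc m. FF s m i - FF s' m i - smult (tau m i ?D) ?M) (2 * int m - 2)"
    proof (rule dle_sum)
      fix i assume "i \<in> {..<Suc m}"
      then show "dle (FF s m i - FF s' m i - smult (tau m i ?D) ?M) (2 * int m - 2)"
        by (intro per_i[OF IH s s']) auto
    qed simp
    then show ?thesis unfolding eq by (simp add: dle_smult)
  qed
  show "dle (EP (Suc m) s) (2 * int (Suc m)) \<and> coeff (EP (Suc m) s) (2 * Suc m) = 1 / fact (Suc m) \<and>
      dle (EP (Suc m) s - EP (Suc m) s' - smult (- sig (Suc m) * ?D) (monom 1 (2 * Suc m - 3))) (2 * int (Suc m) - 4)"
    using part1 part2 part3 by blast
qed

lemma MainP_all: "MainP q"
proof (induction q rule: less_induct)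
  case (less q)
  show ?case
  proof (cases q)
    case 0 then show ?thesis by (simp add: MainP_0)
  next
    case (Suc m) then show ?thesis using MainP_Suc less by simp
  qed
qed

end


lemma mod_shift:
  fixes a n :: nat
  assumes "a \<ge> 1" "n \<ge> 1"
  shows "(n - 1) mod a + 1 = (if n mod a = 0 then a else n mod a)"
proof -
  obtain n' where n: "n = Suc n'" using assms(2) by (cases n) auto
  have "n' mod a < a" using assms(1) by simp
  then show ?thesis unfolding n using mod_Suc[of n' a] by auto
qed

context rider
begin

lemma u_poly:
  assumes "s \<in> {1..a}"
  shows "real (u_rider c d q (a * J + s)) = poly (EP q s) (real (a * J + s))"
  using u_esym[of q "a * J + s"] QP_eq[OF ek_qpoly assms, of q J]
  unfolding EP_def ek_def by simp

lemma u_poly_n: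
  assumes "n \<ge> 1"
  shows "real (u_rider c d q n) = poly (EP q (if n mod a = 0 then a else n mod a)) (real n)"
proof -
  define s where "s = (n - 1) mod a + 1"
  define J where "J = (n - 1) div a"
  have "(n - 1) mod a < a" using a_ge1 by simp
  then have s: "s \<in> {1..a}" by (simp add: s_def)
  have n: "n = a * J + s" using assms unfolding s_def J_def by (metis add.commute div_mult_mod_eq le_add_diff_inverse mult.commute add.left_commute)
  have "s = (if n mod a = 0 then a else n mod a)" unfolding s_def by (rule mod_shift[OF a_ge1 assms])
  then show ?thesis using u_poly[OF s, of q J] n by simp
qed

lemma is_qp_a: "is_quasi_period (u_rider c d q) a"
  unfolding is_quasi_period_def
proof (intro conjI exI allI impI)
  show "0 < a" using a_ge1 by simp
  fix n :: nat assume "1 \<le> n"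
  then show "real (u_rider c d q n) = poly ((\<lambda>r. EP q (if r = 0 then a else r)) (n mod a)) (real n)"
    using u_poly_n by simp
qed

lemma pii_formula:
  assumes "s \<in> {1..a}"
  shows "pii s = (real a - real b) * real s * (real a - real s) / (real a)^2 + real b / 3"
  unfolding pii_def PP_2[OF assms] W2_def using a_ge1
  by (simp add: field_simps power2_eq_square)

lemma not_qp_small:
  assumes q: "q \<ge> 2" and ab: "a \<noteq> b" and p0: "0 < p" and pa: "p < a"
  shows "\<not> is_quasi_period (u_rider c d q) p"
proof
  assume "is_quasi_period (u_rider c d q) p"
  then obtain P where P: "\<And>n. n \<ge> 1 \<Longrightarrow> real (u_rider c d q n) = poly (P (n mod p)) (real n)"
    unfolding is_quasi_period_def by blast
  have sa: "a \<in> {1..a}" using a_ge1 by simp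
  have sap: "a - p \<in> {1..a}" using pa p0 by simp
  have ap1: "a * p \<ge> 1" using a_ge1 p0 by simp
  have e1: "P (a mod p) = EP q a"
  proof (rule poly_eq_AP[OF ap1, of _ a])
    fix J
    have "a * p * J + a = a + (a * J) * p" by (simp add: algebra_simps)
    then have "(a * p * J + a) mod p = a mod p" by (simp only: mod_mult_self1)
    moreover have "real (u_rider c d q (a * (p * J) + a)) = poly (EP q a) (real (a * (p * J) + a))"
      by (rule u_poly[OF sa])
    moreover have "real (u_rider c d q (a * p * J + a)) = poly (P ((a * p * J + a) mod p)) (real (a * p * J + a))"
      by (rule P) (use a_ge1 in simp)
    ultimately show "poly (P (a mod p)) (real (a * p * J + a)) = poly (EP q a) (real (a * p * J + a))"
      by (simp add: mult.assoc)
  qed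
  have e2: "P (a mod p) = EP q (a - p)"
  proof (rule poly_eq_AP[OF ap1, of _ "a - p"])
    fix J
    have "a * p * J + (a - p) = (a - p) + (a * J) * p" by (simp add: algebra_simps)
    then have "(a * p * J + (a - p)) mod p = (a - p) mod p" by (simp only: mod_mult_self1)
    also have "\<dots> = a mod p" using le_mod_geq[of p a] pa by simp
    finally have m: "(a * p * J + (a - p)) mod p = a mod p" .
    have "real (u_rider c d q (a * (p * J) + (a - p))) = poly (EP q (a - p)) (real (a * (p * J) + (a - p)))"
      by (rule u_poly[OF sap])
    moreover have "real (u_rider c d q (a * p * J + (a - p))) = poly (P ((a * p * J + (a - p)) mod p)) (real (a * p * J + (a - p)))"
      by (rule P) (use pa in simp)
    ultimately show "poly (P (a mod p)) (real (a * p * J + (a - p))) = poly (EP q (a - p)) (real (a * p * J + (a - p)))"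
      using m by (simp add: mult.assoc)
  qed
  have eq: "EP q a = EP q (a - p)" using e1 e2 by simp
  let ?D = "pii a - pii (a - p)"
  have "dle (EP q a - EP q (a - p) - smult (- sig q * ?D) (monom 1 (2 * q - 3))) (2 * int q - 4)"
    using MainP_all[of q] sa sap unfolding MainP_def by blast
  then have "dle (smult (sig q * ?D) (monom 1 (2 * q - 3))) (2 * int q - 4)"
    using eq by simp
  then have "coeff (smult (sig q * ?D) (monom 1 (2 * q - 3))) (2 * q - 3) = 0"
    by (rule coeff_dle_zero) (use q in simp)
  then have "sig q * ?D = 0" by simp
  moreover have "sig q > 0" using q by (simp add: sig_def)
  moreover have "?D \<noteq> 0"
  proof -
    have "?D = - ((real a - real b) * real p * (real a - real p) / (real a)^2)"
      unfolding pii_formula[OF sa] pii_formula[OF sap] using pa by (simp add: of_nat_diff field_simps)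
    moreover have "(real a - real b) * real p * (real a - real p) / (real a)^2 \<noteq> 0"
      using ab pa p0 a_ge1 by simp
    ultimately show ?thesis by simp
  qed
  ultimately show False by simp
qed

end

theorem theorem4p2:
  fixes c d :: int and q :: nat
  assumes "(c, d) \<noteq> (0, 0)" and "gcd c d = 1" and "q \<ge> 2"
  shows "(\<exists>p. is_quasi_period (u_rider c d q) p) \<and>
         quasi_period (u_rider c d q) = nat (max \<bar>c\<bar> \<bar>d\<bar>)"
proof -
  interpret rider c d by unfold_locales (rule assms(1))
  have qa: "is_quasi_period (u_rider c d q) a" by (rule is_qp_a)
  have least: "quasi_period (u_rider c d q) = a"
    unfolding quasi_period_def
  proof (rule Least_equality)
    show "is_quasi_period (u_rider c d q) a" by (rule qa)
  next
    fix p assume hp: "is_quasi_period (u_rider c d q) p"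
    show "a \<le> p"
    proof (rule ccontr)
      assume "\<not> a \<le> p"
      then have pa: "p < a" by simp
      have p0: "0 < p" using hp by (simp add: is_quasi_period_def)
      have ab: "a \<noteq> b"
      proof
        assume "a = b"
        then have "nat (max \<bar>c\<bar> \<bar>d\<bar>) = nat (min \<bar>c\<bar> \<bar>d\<bar>)" unfolding a_def b_def by simp
        then have cd: "\<bar>d\<bar> = \<bar>c\<bar>"
          by (cases "\<bar>c\<bar> \<le> \<bar>d\<bar>") (simp_all add: max_def min_def eq_nat_nat_iff)
        have "gcd c d = gcd \<bar>c\<bar> \<bar>d\<bar>" by simp
        also have "\<dots> = \<bar>c\<bar>" unfolding cd by (simp add: gcd_idem_int)
        finally have "\<bar>c\<bar> = 1" using assms(2) by simp
        then have "a = 1" unfolding a_def using cd by simp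
        then show False using pa p0 by simp
      qed
      show False using not_qp_small[OF assms(3) ab p0 pa] hp by simp
    qed
  qed
  show ?thesis using qa least by (auto simp: a_def)
qed

end
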